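(* Let $(\nu_j)_{j\in\mathbb Z}$ be a bounded real sequence, $(H\psi)_n=\psi_{n+1}+\psi_{n-1}+\nu_n\psi_n$ on $\ell^2(\mathbb Z)$, $(A\psi)_n=i(\psi_{n+1}-\psi_{n-1})$, and suppose that for some real sequence $T_k\to+\infty$, $\frac1{T_k}\int_0^{T_k}e^{iHt}Ae^{-iHt}dt\to Q$ strongly. Then for every $\varepsilon>0$ there exist $K(\varepsilon)\in\mathbb N$, $L(\varepsilon)\ge0$ and $C(\varepsilon)>0$ such that for every $k\ge K(\varepsilon)$ there are $l,r\in\mathbb Z$ with $|l|\le L(\varepsilon)$ and $(\|Q\|-\varepsilon)T_k\le|r|\le(\|Q\|+\varepsilon)T_k$ satisfying $$|\langle\delta_r,e^{-iT_kH}\delta_l\rangle|^2\ge\frac{C(\varepsilon)}{T_k}.$$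
   Context: $\delta_j$ denotes the standard basis vector of $\ell^2(\mathbb Z)$ supported at $j$. *)

theory Defs
  imports "HOL-Analysis.Analysis"
begin

definition ell2 :: "(int \<Rightarrow> complex) set" where
  "ell2 = {\<psi>. (\<lambda>n. (cmod (\<psi> n))\<^sup>2) summable_on UNIV}"

definition l2norm :: "(int \<Rightarrow> complex) \<Rightarrow> real" where
  "l2norm \<psi> = sqrt (infsum (\<lambda>n. (cmod (\<psi> n))\<^sup>2) UNIV)"

definition l2inner :: "(int \<Rightarrow> complex) \<Rightarrow> (int \<Rightarrow> complex) \<Rightarrow> complex" where
  "l2inner \<phi> \<psi> = infsum (\<lambda>n. cnj (\<phi> n) * \<psi> n) UNIV"

definition delta :: "int \<Rightarrow> int \<Rightarrow> complex" where
  "delta j = (\<lambda>n. if n = j then 1 else 0)"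

definition opnorm :: "((int \<Rightarrow> complex) \<Rightarrow> (int \<Rightarrow> complex)) \<Rightarrow> real" where
  "opnorm Q = Sup {l2norm (Q \<psi>) | \<psi>. \<psi> \<in> ell2 \<and> l2norm \<psi> \<le> 1}"

definition schrH :: "(int \<Rightarrow> real) \<Rightarrow> (int \<Rightarrow> complex) \<Rightarrow> (int \<Rightarrow> complex)" where
  "schrH \<nu> \<psi> = (\<lambda>n. \<psi> (n + 1) + \<psi> (n - 1) + complex_of_real (\<nu> n) * \<psi> n)"

definition opA :: "(int \<Rightarrow> complex) \<Rightarrow> (int \<Rightarrow> complex)" where
  "opA \<psi> = (\<lambda>n. \<i> * (\<psi> (n + 1) - \<psi> (n - 1)))"

text \<open>e^{-itH} for bounded H, via its (norm-convergent) exponential series, evaluated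
  componentwise.\<close>
definition evol :: "(int \<Rightarrow> real) \<Rightarrow> real \<Rightarrow> (int \<Rightarrow> complex) \<Rightarrow> (int \<Rightarrow> complex)" where
  "evol \<nu> t \<psi> = (\<lambda>n. (\<Sum>k. (- \<i> * complex_of_real t) ^ k / of_nat (fact k) * ((schrH \<nu> ^^ k) \<psi>) n))"

definition heis :: "(int \<Rightarrow> real) \<Rightarrow> real \<Rightarrow> (int \<Rightarrow> complex) \<Rightarrow> (int \<Rightarrow> complex)" where
  "heis \<nu> t \<psi> = evol \<nu> (- t) (opA (evol \<nu> t \<psi>))"

definition tavg :: "(int \<Rightarrow> real) \<Rightarrow> real \<Rightarrow> (int \<Rightarrow> complex) \<Rightarrow> (int \<Rightarrow> complex)" where
  "tavg \<nu> T \<psi> = (\<lambda>n. complex_of_real (1 / T) * integral {0..T} (\<lambda>t. heis \<nu> t \<psi> n))"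

end

theory Submission
  imports Defs
begin

lemma real_sq_ineq: "2 * (x::real) * y \<le> x\<^sup>2 + y\<^sup>2"
proof -
  have "0 \<le> (x - y)\<^sup>2" by simp
  thus ?thesis unfolding power2_diff by linarith
qed

lemma cprod_le: "cmod a * cmod b \<le> (cmod a)\<^sup>2 + (cmod b)\<^sup>2"
  using real_sq_ineq[of "cmod a" "cmod b"] mult_nonneg_nonneg[OF norm_ge_zero norm_ge_zero, of a b] by linarith

lemma sq_add_le: "(cmod (a + b))\<^sup>2 \<le> 2 * (cmod a)\<^sup>2 + 2 * (cmod b)\<^sup>2"
proof -
  have "cmod (a+b) \<le> cmod a + cmod b" by (rule norm_triangle_ineq)
  hence "(cmod (a+b))\<^sup>2 \<le> (cmod a + cmod b)\<^sup>2" by (simp add: power_mono)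
  also have "\<dots> \<le> 2 * (cmod a)\<^sup>2 + 2 * (cmod b)\<^sup>2"
    using real_sq_ineq[of "cmod a" "cmod b"] unfolding power2_sum by linarith
  finally show ?thesis .
qed

lemma ell2_add: "\<psi> \<in> ell2 \<Longrightarrow> \<phi> \<in> ell2 \<Longrightarrow> (\<lambda>n. \<psi> n + \<phi> n) \<in> ell2"
  unfolding ell2_def
  apply clarsimp
  apply (rule summable_on_comparison_test[where f="\<lambda>n. 2 * (cmod (\<psi> n))\<^sup>2 + 2 * (cmod (\<phi> n))\<^sup>2"])
  by (auto intro!: summable_on_add summable_on_cmult_right sq_add_le)

lemma ell2_scale: "\<psi> \<in> ell2 \<Longrightarrow> (\<lambda>n. c * \<psi> n) \<in> ell2"
  unfolding ell2_def
  by (auto simp: norm_mult power_mult_distrib intro!: summable_on_cmult_right)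

lemma ell2_zero: "(\<lambda>n. 0) \<in> ell2"
  unfolding ell2_def by simp

lemma ell2_uminus: "\<psi> \<in> ell2 \<Longrightarrow> (\<lambda>n. - \<psi> n) \<in> ell2"
  unfolding ell2_def by simp

lemma ell2_diff: "\<psi> \<in> ell2 \<Longrightarrow> \<phi> \<in> ell2 \<Longrightarrow> (\<lambda>n. \<psi> n - \<phi> n) \<in> ell2"
  using ell2_add[of \<psi> "\<lambda>n. - \<phi> n"] ell2_uminus[of \<phi>] by simp

lemma ell2_prod_abs: "\<psi> \<in> ell2 \<Longrightarrow> \<phi> \<in> ell2 \<Longrightarrow> (\<lambda>n. norm (cnj (\<psi> n) * \<phi> n)) summable_on UNIV"
  unfolding ell2_def
  apply clarsimp
  apply (rule summable_on_comparison_test[where f="\<lambda>n. (cmod (\<psi> n))\<^sup>2 + (cmod (\<phi> n))\<^sup>2"])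
  apply (auto intro!: summable_on_add simp: norm_mult)
  by (rule cprod_le)

lemma ell2_prod: "\<psi> \<in> ell2 \<Longrightarrow> \<phi> \<in> ell2 \<Longrightarrow> (\<lambda>n. cnj (\<psi> n) * \<phi> n) summable_on UNIV"
  by (rule abs_summable_summable, rule ell2_prod_abs)

typedef l2 = "ell2" morphisms vec mk_l2
  using ell2_zero by blast

setup_lifting type_definition_l2

lemma vec_in [simp]: "vec x \<in> ell2" using vec by blast

lemma l2_eqI: "(\<And>n. vec x n = vec y n) \<Longrightarrow> x = y"
  by (simp add: vec_inject[symmetric] fun_eq_iff)

lemma vec_sq_summable: "(\<lambda>n. (cmod (vec x n))\<^sup>2) summable_on UNIV"
  using vec_in unfolding ell2_def by blast

definition cinner :: "l2 \<Rightarrow> l2 \<Rightarrow> complex" where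
  "cinner x y = infsum (\<lambda>n. cnj (vec x n) * vec y n) UNIV"

instantiation l2 :: real_inner
begin
lift_definition zero_l2 :: l2 is "\<lambda>n. 0" by (rule ell2_zero)
lift_definition plus_l2 :: "l2 \<Rightarrow> l2 \<Rightarrow> l2" is "\<lambda>\<psi> \<phi> n. \<psi> n + \<phi> n" by (rule ell2_add)
lift_definition uminus_l2 :: "l2 \<Rightarrow> l2" is "\<lambda>\<psi> n. - \<psi> n" by (rule ell2_uminus)
lift_definition minus_l2 :: "l2 \<Rightarrow> l2 \<Rightarrow> l2" is "\<lambda>\<psi> \<phi> n. \<psi> n - \<phi> n" by (rule ell2_diff)
lift_definition scaleR_l2 :: "real \<Rightarrow> l2 \<Rightarrow> l2" is "\<lambda>r \<psi> n. complex_of_real r * \<psi> n" by (rule ell2_scale)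
definition inner_l2 :: "l2 \<Rightarrow> l2 \<Rightarrow> real" where "inner_l2 x y = Re (cinner x y)"
definition norm_l2 :: "l2 \<Rightarrow> real" where "norm_l2 x = sqrt (inner x x)"
definition sgn_l2 :: "l2 \<Rightarrow> l2" where "sgn_l2 x = scaleR (inverse (norm x)) x"
definition dist_l2 :: "l2 \<Rightarrow> l2 \<Rightarrow> real" where "dist_l2 x y = norm (x - y)"
definition uniformity_l2 :: "(l2 \<times> l2) filter" where
  "uniformity_l2 = (INF e\<in>{0<..}. principal {(x, y). dist x y < e})"
definition open_l2 :: "l2 set \<Rightarrow> bool" where
  "open_l2 U = (\<forall>x\<in>U. \<forall>\<^sub>F (x', y) in uniformity. x' = x \<longrightarrow> y \<in> U)"

lemma cinner_self: "cinner x x = of_real (infsum (\<lambda>n. (cmod (vec x n))\<^sup>2) UNIV)"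
proof -
  have "(\<lambda>n. cnj (vec x n) * vec x n) = (\<lambda>n. of_real ((cmod (vec x n))\<^sup>2))"
    by (metis complex_norm_square mult.commute)
  thus ?thesis unfolding cinner_def
    by (metis has_sum_infsum has_sum_of_real infsumI vec_sq_summable)
qed

instance
proof
  fix x y z :: l2 and a b :: real
  show "x + y + z = x + (y + z)" by transfer (simp add: add.assoc)
  show "x + y = y + x" by transfer (simp add: add.commute)
  show "0 + x = x" by transfer simp
  show "- x + x = 0" by transfer simp
  show "x - y = x + - y" by transfer simp
  show "a *\<^sub>R (x + y) = a *\<^sub>R x + a *\<^sub>R y" by transfer (simp add: distrib_left)
  show "(a + b) *\<^sub>R x = a *\<^sub>R x + b *\<^sub>R x" by transfer (simp add: distrib_right)
  show "a *\<^sub>R b *\<^sub>R x = (a * b) *\<^sub>R x" by transfer (simp add: mult.assoc)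
  show "1 *\<^sub>R x = x" by transfer simp
  show "dist x y = norm (x - y)" by (simp add: dist_l2_def)
  show "sgn x = inverse (norm x) *\<^sub>R x" by (simp add: sgn_l2_def)
  show "(uniformity :: (l2 \<times> l2) filter) = (INF e\<in>{0<..}. principal {(x, y). dist x y < e})"
    by (simp add: uniformity_l2_def)
  show "open U = (\<forall>x\<in>U. \<forall>\<^sub>F (x', y) in uniformity. x' = x \<longrightarrow> y \<in> U)" for U :: "l2 set"
    by (simp add: open_l2_def)
  show "inner x y = inner y x"
  proof -
    have "cnj (cinner x y) = cinner y x" unfolding cinner_def
      by (subst infsum_cnj[symmetric]) (simp add: mult.commute)
    thus ?thesis unfolding inner_l2_def by (metis complex_cnj_cnj cnj.simps(1))
  qed
  show "inner (x + y) z = inner x z + inner y z"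
    unfolding inner_l2_def cinner_def
    apply transfer
    by (simp add: distrib_right infsum_add ell2_prod)
  show "inner (a *\<^sub>R x) y = a * inner x y"
    unfolding inner_l2_def cinner_def
    apply transfer
    by (simp add: mult.assoc infsum_cmult_right ell2_prod)
  show "0 \<le> inner x x"
    unfolding inner_l2_def cinner_self by (simp add: infsum_nonneg)
  show "(inner x x = 0) = (x = 0)"
  proof
    assume "inner x x = 0"
    hence "infsum (\<lambda>n. (cmod (vec x n))\<^sup>2) UNIV = 0" unfolding inner_l2_def cinner_self by simp
    hence "\<And>n. (cmod (vec x n))\<^sup>2 = 0"
      using nonneg_infsum_le_0D[OF _ vec_sq_summable] by (metis UNIV_I order_refl zero_le_power2)
    thus "x = 0" by (intro l2_eqI) (simp add: zero_l2.rep_eq)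
  next
    assume "x = 0" thus "inner x x = 0" unfolding inner_l2_def cinner_def by (simp add: zero_l2.rep_eq)
  qed
  show "norm x = sqrt (inner x x)" by (simp add: norm_l2_def)
qed
end



typedef (overloaded) 'a op = "UNIV :: ('a::real_normed_vector \<Rightarrow>\<^sub>L 'a) set" morphisms blin Op by simp

setup_lifting type_definition_op

instantiation op :: (real_normed_vector) real_normed_vector
begin
lift_definition zero_op :: "'a op" is 0 .
lift_definition plus_op :: "'a op \<Rightarrow> 'a op \<Rightarrow> 'a op" is "(+)" .
lift_definition minus_op :: "'a op \<Rightarrow> 'a op \<Rightarrow> 'a op" is "(-)" .
lift_definition uminus_op :: "'a op \<Rightarrow> 'a op" is "uminus" .
lift_definition scaleR_op :: "real \<Rightarrow> 'a op \<Rightarrow> 'a op" is "scaleR" .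
lift_definition norm_op :: "'a op \<Rightarrow> real" is norm .
definition sgn_op :: "'a op \<Rightarrow> 'a op" where "sgn_op x = scaleR (inverse (norm x)) x"
definition dist_op :: "'a op \<Rightarrow> 'a op \<Rightarrow> real" where "dist_op x y = norm (x - y)"
definition uniformity_op :: "('a op \<times> 'a op) filter" where
  "uniformity_op = (INF e\<in>{0<..}. principal {(x, y). dist x y < e})"
definition open_op :: "'a op set \<Rightarrow> bool" where
  "open_op U = (\<forall>x\<in>U. \<forall>\<^sub>F (x', y) in uniformity. x' = x \<longrightarrow> y \<in> U)"
instance
  apply standard
  unfolding dist_op_def open_op_def sgn_op_def uniformity_op_def
  apply (rule refl | (transfer, force simp: norm_triangle_ineq algebra_simps))+
  done
end

instantiation op :: ("{real_normed_vector, perfect_space}") real_normed_algebra_1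
begin
lift_definition one_op :: "'a op" is id_blinfun .
lift_definition times_op :: "'a op \<Rightarrow> 'a op \<Rightarrow> 'a op" is blinfun_compose .
instance
proof
  fix a b c :: "'a op" and r :: real
  show "a * b * c = a * (b * c)" by transfer (rule blinfun_eqI, simp)
  show "1 * a = a" by transfer (rule blinfun_eqI, simp)
  show "a * 1 = a" by transfer (rule blinfun_eqI, simp)
  show "(a + b) * c = a * c + b * c" by transfer (rule blinfun_eqI, simp add: blinfun.bilinear_simps)
  show "a * (b + c) = a * b + a * c" by transfer (rule blinfun_eqI, simp add: blinfun.bilinear_simps)
  show "(0::'a op) \<noteq> 1" by transfer (metis norm_blinfun_id norm_zero zero_neq_one)
  show "r *\<^sub>R a * b = r *\<^sub>R (a * b)" by transfer (rule blinfun_eqI, simp add: blinfun.bilinear_simps)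
  show "a * r *\<^sub>R b = r *\<^sub>R (a * b)" by transfer (rule blinfun_eqI, simp add: blinfun.bilinear_simps)
  show "norm (a * b) \<le> norm a * norm b" by transfer (rule norm_blinfun_compose)
  show "norm (1::'a op) = 1" by transfer simp
qed
end

instance op :: (banach) banach
proof
  fix X :: "nat \<Rightarrow> 'a op"
  assume "Cauchy X"
  hence "Cauchy (\<lambda>n. blin (X n))"
    unfolding Cauchy_def dist_op_def dist_norm by (simp add: norm_op.rep_eq minus_op.rep_eq)
  then obtain L where L: "(\<lambda>n. blin (X n)) \<longlonglongrightarrow> L" using Cauchy_convergent_iff convergent_def by blast
  have "X \<longlonglongrightarrow> Op L"
    using L unfolding tendsto_iff dist_op_def dist_norm
    by (simp add: norm_op.rep_eq minus_op.rep_eq Op_inverse)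
  thus "convergent X" by (auto simp: convergent_def)
qed

lemma blin_mult [simp]: "blin (a * b) x = blin a (blin b x)"
  by (simp add: times_op.rep_eq)
lemma blin_one [simp]: "blin 1 x = x"
  by (simp add: one_op.rep_eq)
lemma blin_add [simp]: "blin (a + b) x = blin a x + blin b x"
  by (simp add: plus_op.rep_eq blinfun.add_left)
lemma blin_diff [simp]: "blin (a - b) x = blin a x - blin b x"
  by (simp add: minus_op.rep_eq blinfun.diff_left)
lemma blin_uminus [simp]: "blin (- a) x = - blin a x"
  by (simp add: uminus_op.rep_eq blinfun.minus_left)
lemma blin_scaleR [simp]: "blin (r *\<^sub>R a) x = r *\<^sub>R blin a x"
  by (simp add: scaleR_op.rep_eq blinfun.scaleR_left)
lemma blin_zero [simp]: "blin 0 x = 0"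
  by (simp add: zero_op.rep_eq)
lemma norm_blin: "norm (blin a x) \<le> norm a * norm x"
  by (simp add: norm_op.rep_eq norm_blinfun)
lemma bounded_linear_blin_app: "bounded_linear (\<lambda>a. blin a x)"
proof -
  have "bounded_linear (\<lambda>a::'a op. blinfun_apply (blin a) x)"
    apply (rule bounded_linear_intro[where K="norm x"])
    apply (simp_all add: plus_op.rep_eq scaleR_op.rep_eq blinfun.bilinear_simps)
    using norm_blin by (metis mult.commute)
  thus ?thesis .
qed

lemma blin_Op: "bounded_linear f \<Longrightarrow> blin (Op (Blinfun f)) x = f x"
  by (simp add: Op_inverse bounded_linear_Blinfun_apply)



lemma vec_plus [simp]: "vec (x + y) n = vec x n + vec y n" by (simp add: plus_l2.rep_eq)
lemma vec_minus [simp]: "vec (x - y) n = vec x n - vec y n" by (simp add: minus_l2.rep_eq)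
lemma vec_uminus [simp]: "vec (- x) n = - vec x n" by (simp add: uminus_l2.rep_eq)
lemma vec_scaleR [simp]: "vec (r *\<^sub>R x) n = complex_of_real r * vec x n" by (simp add: scaleR_l2.rep_eq)
lemma vec_zero [simp]: "vec 0 n = 0" by (simp add: zero_l2.rep_eq)
lemma vec_mk [simp]: "\<psi> \<in> ell2 \<Longrightarrow> vec (mk_l2 \<psi>) = \<psi>" by (simp add: mk_l2_inverse)

lemma norm_sq_l2: "(norm x)\<^sup>2 = infsum (\<lambda>n. (cmod (vec x n))\<^sup>2) UNIV"
proof -
  have "(norm x)\<^sup>2 = inner x x" by (simp add: power2_norm_eq_inner)
  also have "\<dots> = infsum (\<lambda>n. (cmod (vec x n))\<^sup>2) UNIV"
    unfolding inner_l2_def cinner_self by simp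
  finally show ?thesis .
qed

lemma norm_l2norm: "norm x = l2norm (vec x)"
  unfolding l2norm_def norm_sq_l2[symmetric] by simp

lemma l2norm_vec: "\<psi> \<in> ell2 \<Longrightarrow> l2norm \<psi> = norm (mk_l2 \<psi>)"
  by (simp add: norm_l2norm)

lemma finite_sq_le: "finite F \<Longrightarrow> (\<Sum>n\<in>F. (cmod (vec x n))\<^sup>2) \<le> (norm x)\<^sup>2"
  unfolding norm_sq_l2 by (rule finite_sum_le_infsum[OF vec_sq_summable]) auto

lemma comp_le_norm: "cmod (vec x n) \<le> norm x"
proof -
  have "(cmod (vec x n))\<^sup>2 \<le> (norm x)\<^sup>2" using finite_sq_le[of "{n}" x] by simp
  thus ?thesis by (rule power2_le_imp_le) simp
qed

lemma bounded_linear_vec_comp: "bounded_linear (\<lambda>x. vec x n)"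
  apply (rule bounded_linear_intro[where K=1])
  using comp_le_norm by (auto simp: scaleR_conv_of_real)

lemma ell2_bounded_sums:
  assumes "\<And>F. finite F \<Longrightarrow> (\<Sum>n\<in>F. (cmod (\<psi> n))\<^sup>2) \<le> B"
  shows "\<psi> \<in> ell2" "infsum (\<lambda>n. (cmod (\<psi> n))\<^sup>2) UNIV \<le> B"
proof -
  have s: "(\<lambda>n. (cmod (\<psi> n))\<^sup>2) summable_on UNIV"
    apply (rule nonneg_bdd_above_summable_on)
    using assms by (auto intro!: bdd_aboveI)
  thus "\<psi> \<in> ell2" unfolding ell2_def by simp
  show "infsum (\<lambda>n. (cmod (\<psi> n))\<^sup>2) UNIV \<le> B"
    by (rule infsum_le_finite_sums[OF s]) (use assms in auto)
qed

instance l2 :: complete_space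
proof
  fix X :: "nat \<Rightarrow> l2"
  assume C: "Cauchy X"
  have "\<forall>n. \<exists>c. (\<lambda>k. vec (X k) n) \<longlonglongrightarrow> c"
  proof
    fix n
    have "Cauchy (\<lambda>k. vec (X k) n)"
      unfolding Cauchy_def
    proof (intro allI impI)
      fix e :: real assume "e > 0"
      then obtain M where M: "\<forall>m\<ge>M. \<forall>k\<ge>M. dist (X m) (X k) < e" using C unfolding Cauchy_def by blast
      show "\<exists>M. \<forall>m\<ge>M. \<forall>k\<ge>M. dist (vec (X m) n) (vec (X k) n) < e"
        apply (rule exI[of _ M])
        by (metis (no_types) M comp_le_norm vec_minus dist_norm le_less_trans)
    qed
    thus "\<exists>c. (\<lambda>k. vec (X k) n) \<longlonglongrightarrow> c" using Cauchy_convergent_iff convergent_def by blast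
  qed
  then obtain f where f: "\<And>n. (\<lambda>k. vec (X k) n) \<longlonglongrightarrow> f n" by metis
  have key: "\<exists>N. \<forall>k\<ge>N. (\<lambda>n. vec (X k) n - f n) \<in> ell2 \<and> infsum (\<lambda>n. (cmod (vec (X k) n - f n))\<^sup>2) UNIV \<le> e\<^sup>2"
    if e: "e > 0" for e
  proof -
    obtain M where M: "\<forall>m\<ge>M. \<forall>k\<ge>M. dist (X m) (X k) < e" using C e unfolding Cauchy_def by blast
    have "(\<Sum>n\<in>F. (cmod (vec (X k) n - f n))\<^sup>2) \<le> e\<^sup>2" if "finite F" "k \<ge> M" for F k
    proof -
      have lim: "(\<lambda>j. \<Sum>n\<in>F. (cmod (vec (X k) n - vec (X j) n))\<^sup>2) \<longlonglongrightarrow> (\<Sum>n\<in>F. (cmod (vec (X k) n - f n))\<^sup>2)"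
        by (intro tendsto_intros f)
      have "\<forall>\<^sub>F j in sequentially. (\<Sum>n\<in>F. (cmod (vec (X k) n - vec (X j) n))\<^sup>2) \<le> e\<^sup>2"
      proof (rule eventually_sequentiallyI[of M])
        fix j assume "j \<ge> M"
        have "(\<Sum>n\<in>F. (cmod (vec (X k) n - vec (X j) n))\<^sup>2) \<le> (norm (X k - X j))\<^sup>2"
          using finite_sq_le[OF that(1), of "X k - X j"] by simp
        also have "\<dots> \<le> e\<^sup>2" using M \<open>j \<ge> M\<close> \<open>k \<ge> M\<close> e
          by (intro power_mono) (auto simp: dist_norm less_imp_le)
        finally show "(\<Sum>n\<in>F. (cmod (vec (X k) n - vec (X j) n))\<^sup>2) \<le> e\<^sup>2" .
      qed
      thus ?thesis using tendsto_upperbound[OF lim] by simp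
    qed
    thus ?thesis using ell2_bounded_sums[of "\<lambda>n. vec (X _) n - f n" "e\<^sup>2"] by blast
  qed
  obtain N where N: "(\<lambda>n. vec (X N) n - f n) \<in> ell2" using key[of 1] by auto
  have fe: "f \<in> ell2" using ell2_diff[OF vec_in[of "X N"] N] by simp
  have "X \<longlonglongrightarrow> mk_l2 f"
  proof (rule LIMSEQ_I)
    fix r :: real assume "r > 0"
    obtain N where N: "\<forall>k\<ge>N. (\<lambda>n. vec (X k) n - f n) \<in> ell2 \<and> infsum (\<lambda>n. (cmod (vec (X k) n - f n))\<^sup>2) UNIV \<le> (r/2)\<^sup>2"
      using key[of "r/2"] \<open>r > 0\<close> by auto
    show "\<exists>no. \<forall>n\<ge>no. norm (X n - mk_l2 f) < r"
    proof (intro exI allI impI)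
      fix k assume "k \<ge> N"
      have vv: "vec (X k - mk_l2 f) = (\<lambda>n. vec (X k) n - f n)" by (rule ext) (simp only: vec_minus vec_mk[OF fe])
      have "(norm (X k - mk_l2 f))\<^sup>2 \<le> (r/2)\<^sup>2"
        unfolding norm_sq_l2 vv using N[rule_format, OF \<open>k \<ge> N\<close>] by (rule conjunct2)
      hence "norm (X k - mk_l2 f) \<le> r/2" by (rule power2_le_imp_le) (use \<open>r > 0\<close> in simp)
      thus "norm (X k - mk_l2 f) < r" using \<open>r > 0\<close> by simp
    qed
  qed
  thus "convergent X" by (auto simp: convergent_def)
qed

definition e0 :: l2 where "e0 = mk_l2 (delta 0)"

lemma delta_ell2: "delta j \<in> ell2"
proof -
  have "(\<lambda>n. (cmod (delta j n))\<^sup>2) summable_on UNIV"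
    by (rule summable_on_cong_neutral[where T="{j}" and g="\<lambda>n. (cmod (delta j n))\<^sup>2", THEN iffD2])
       (auto simp: delta_def)
  thus ?thesis unfolding ell2_def by simp
qed

lemma vec_e0: "vec e0 = delta 0" by (simp add: e0_def delta_ell2)

lemma e0_nz: "e0 \<noteq> 0"
proof
  assume "e0 = 0" hence "vec e0 0 = 0" by simp
  thus False by (simp add: vec_e0 delta_def)
qed

instance l2 :: perfect_space
proof
  fix x :: l2
  show "\<not> open {x}"
  proof
    assume "open {x}"
    then obtain e where e: "e > 0" "ball x e \<subseteq> {x}" using open_contains_ball by blast
    let ?y = "x + (e / (2 * norm e0)) *\<^sub>R e0"
    have "norm e0 > 0" using e0_nz by simp
    hence nn: "norm ((e / (2 * norm e0)) *\<^sub>R e0) = e/2" using e by simp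
    have "dist x ?y = norm ((e / (2 * norm e0)) *\<^sub>R e0)" by (simp add: dist_norm)
    hence "dist x ?y < e" using nn e by simp
    hence "?y = x" using e by auto
    hence "(e / (2 * norm e0)) *\<^sub>R e0 = 0" by (metis add_cancel_left_right)
    thus False using e e0_nz \<open>norm e0 > 0\<close> by simp
  qed
qed

instance prod :: (perfect_space, perfect_space) perfect_space
proof
  fix x :: "'a \<times> 'b"
  show "\<not> open {x}"
  proof
    assume "open {x}"
    then obtain A B where "open A" "open B" "x \<in> A \<times> B" "A \<times> B \<subseteq> {x}"
      using open_prod_elim[of "{x}" x] by blast
    hence "A = {fst x}" by (auto simp: mem_Times_iff) (metis SigmaI fst_conv singletonD subsetD)
    thus False using \<open>open A\<close> not_open_singleton by auto
  qed
qed



definition rawlin :: "((int\<Rightarrow>complex) \<Rightarrow> (int\<Rightarrow>complex)) \<Rightarrow> bool" where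
  "rawlin L \<longleftrightarrow> (\<forall>\<psi> \<phi>. L (\<lambda>n. \<psi> n + \<phi> n) = (\<lambda>n. L \<psi> n + L \<phi> n)) \<and>
     (\<forall>c \<psi>. L (\<lambda>n. c * \<psi> n) = (\<lambda>n. c * L \<psi> n))"

definition opbound :: "((int\<Rightarrow>complex) \<Rightarrow> (int\<Rightarrow>complex)) \<Rightarrow> real \<Rightarrow> bool" where
  "opbound L K \<longleftrightarrow> (\<forall>\<psi>\<in>ell2. L \<psi> \<in> ell2 \<and> l2norm (L \<psi>) \<le> K * l2norm \<psi>)"

definition mkop :: "((int\<Rightarrow>complex) \<Rightarrow> (int\<Rightarrow>complex)) \<Rightarrow> l2 op" where
  "mkop L = Op (Blinfun (\<lambda>x. mk_l2 (L (vec x))))"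

lemma mkop_bl:
  assumes "rawlin L" "opbound L K"
  shows "bounded_linear (\<lambda>x. mk_l2 (L (vec x)))"
proof (rule bounded_linear_intro[where K=K])
  fix x y :: l2 and r :: real
  have e: "L (vec x) \<in> ell2" "L (vec y) \<in> ell2" using assms(2) unfolding opbound_def by auto
  have "vec (x + y) = (\<lambda>n. vec x n + vec y n)" by auto
  hence "L (vec (x + y)) = (\<lambda>n. L (vec x) n + L (vec y) n)" using assms(1) unfolding rawlin_def by metis
  thus "mk_l2 (L (vec (x + y))) = mk_l2 (L (vec x)) + mk_l2 (L (vec y))"
    by (intro l2_eqI) (simp add: e ell2_add)
  have "vec (r *\<^sub>R x) = (\<lambda>n. complex_of_real r * vec x n)" by auto
  hence "L (vec (r *\<^sub>R x)) = (\<lambda>n. complex_of_real r * L (vec x) n)" using assms(1) unfolding rawlin_def by metis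
  thus "mk_l2 (L (vec (r *\<^sub>R x))) = r *\<^sub>R mk_l2 (L (vec x))"
    by (intro l2_eqI) (simp add: e ell2_scale)
  show "norm (mk_l2 (L (vec x))) \<le> norm x * K"
    using assms(2) e unfolding opbound_def by (simp add: norm_l2norm mult.commute)
qed

lemma vec_mkop:
  assumes "rawlin L" "opbound L K"
  shows "vec (blin (mkop L) x) = L (vec x)"
proof -
  have "L (vec x) \<in> ell2" using assms(2) unfolding opbound_def by auto
  thus ?thesis unfolding mkop_def using blin_Op[OF mkop_bl[OF assms]] by simp
qed

definition sp :: "(int\<Rightarrow>complex) \<Rightarrow> (int\<Rightarrow>complex)" where "sp \<psi> = (\<lambda>n. \<psi> (n + 1))"
definition sm :: "(int\<Rightarrow>complex) \<Rightarrow> (int\<Rightarrow>complex)" where "sm \<psi> = (\<lambda>n. \<psi> (n - 1))"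
definition mulf :: "(int\<Rightarrow>complex) \<Rightarrow> (int\<Rightarrow>complex) \<Rightarrow> (int\<Rightarrow>complex)" where "mulf g \<psi> = (\<lambda>n. g n * \<psi> n)"

lemma rawlin_sp: "rawlin sp" unfolding rawlin_def sp_def by auto
lemma rawlin_sm: "rawlin sm" unfolding rawlin_def sp_def sm_def by auto
lemma rawlin_mulf: "rawlin (mulf g)" unfolding rawlin_def mulf_def by (auto simp: algebra_simps)

lemma shift_sq: "infsum (\<lambda>n. f (n + d)) UNIV = infsum (f::int \<Rightarrow> real) UNIV"
  "(\<lambda>n. f (n + d)) summable_on UNIV \<longleftrightarrow> f summable_on UNIV"
proof -
  have b: "bij_betw (\<lambda>n. n + d) UNIV UNIV" by (rule bij_betwI[where g="\<lambda>n. n - d"]) auto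
  show "infsum (\<lambda>n. f (n + d)) UNIV = infsum f UNIV" by (rule infsum_reindex_bij_betw[OF b])
  show "(\<lambda>n. f (n + d)) summable_on UNIV \<longleftrightarrow> f summable_on UNIV"
    using summable_on_reindex_bij_betw[OF b, of f] by blast
qed

lemma opbound_sp: "opbound sp 1"
  unfolding opbound_def ell2_def l2norm_def sp_def
  using shift_sq[of "\<lambda>n. (cmod (_ n))\<^sup>2" 1] by auto

lemma opbound_sm: "opbound sm 1"
  unfolding opbound_def ell2_def l2norm_def sm_def
  using shift_sq[of "\<lambda>n. (cmod (_ n))\<^sup>2" "-1"] by auto

lemma opbound_mulf:
  assumes "\<And>n. cmod (g n) \<le> M"
  shows "opbound (mulf g) M"
  unfolding opbound_def
proof (intro ballI conjI)
  fix \<psi> assume "\<psi> \<in> ell2"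
  hence s: "(\<lambda>n. (cmod (\<psi> n))\<^sup>2) summable_on UNIV" unfolding ell2_def by simp
  have M0: "0 \<le> M" using assms[of 0] norm_ge_zero order_trans by blast
  have le: "(cmod (mulf g \<psi> n))\<^sup>2 \<le> M\<^sup>2 * (cmod (\<psi> n))\<^sup>2" for n
    unfolding mulf_def norm_mult power_mult_distrib
    by (intro mult_right_mono power_mono assms) auto
  have s2: "(\<lambda>n. M\<^sup>2 * (cmod (\<psi> n))\<^sup>2) summable_on UNIV" using s by (rule summable_on_cmult_right)
  show "mulf g \<psi> \<in> ell2" unfolding ell2_def mem_Collect_eq
    by (rule summable_on_comparison_test[OF s2]) (use le in auto)
  hence s3: "(\<lambda>n. (cmod (mulf g \<psi> n))\<^sup>2) summable_on UNIV" unfolding ell2_def by simp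
  have "infsum (\<lambda>n. (cmod (mulf g \<psi> n))\<^sup>2) UNIV \<le> infsum (\<lambda>n. M\<^sup>2 * (cmod (\<psi> n))\<^sup>2) UNIV"
    by (rule infsum_mono[OF s3 s2 le])
  also have "\<dots> = M\<^sup>2 * infsum (\<lambda>n. (cmod (\<psi> n))\<^sup>2) UNIV" by (rule infsum_cmult_right')
  finally have "l2norm (mulf g \<psi>) \<le> sqrt (M\<^sup>2 * infsum (\<lambda>n. (cmod (\<psi> n))\<^sup>2) UNIV)"
    unfolding l2norm_def by (rule real_sqrt_le_mono)
  thus "l2norm (mulf g \<psi>) \<le> M * l2norm \<psi>" unfolding l2norm_def using M0 by (simp add: real_sqrt_mult)
qed

definition Sp :: "l2 op" where "Sp = mkop sp"
definition Sm :: "l2 op" where "Sm = mkop sm"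
definition Jop :: "l2 op" where "Jop = mkop (mulf (\<lambda>_. \<i>))"

lemma vec_Sp: "vec (blin Sp x) = sp (vec x)" unfolding Sp_def by (rule vec_mkop[OF rawlin_sp opbound_sp])
lemma vec_Sm: "vec (blin Sm x) = sm (vec x)" unfolding Sm_def by (rule vec_mkop[OF rawlin_sm opbound_sm])
lemma vec_Jop: "vec (blin Jop x) = (\<lambda>n. \<i> * vec x n)" unfolding Jop_def
  using vec_mkop[OF rawlin_mulf opbound_mulf[of "\<lambda>_. \<i>" 1]] by (simp add: mulf_def)

definition Aop :: "l2 op" where "Aop = Jop * (Sp - Sm)"

lemma vec_Aop: "vec (blin Aop x) = opA (vec x)"
  unfolding Aop_def opA_def by (simp add: vec_Jop vec_Sp vec_Sm sp_def sm_def fun_eq_iff)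

definition cmul :: "complex \<Rightarrow> l2 \<Rightarrow> l2" where "cmul c x = mk_l2 (\<lambda>n. c * vec x n)"
lemma vec_cmul [simp]: "vec (cmul c x) = (\<lambda>n. c * vec x n)"
  unfolding cmul_def by (simp add: ell2_scale)

lemma cinner_add_left: "cinner (x + y) z = cinner x z + cinner y z"
  unfolding cinner_def by (simp add: distrib_right infsum_add ell2_prod)
lemma cinner_add_right: "cinner z (x + y) = cinner z x + cinner z y"
  unfolding cinner_def by (simp add: distrib_left infsum_add ell2_prod)
lemma cinner_diff_left: "cinner (x - y) z = cinner x z - cinner y z"
  using cinner_add_left[of "x - y" y z] by simp
lemma cinner_diff_right: "cinner z (x - y) = cinner z x - cinner z y"
  using cinner_add_right[of z "x - y" y] by simp
lemma cinner_cmul_left: "cinner (cmul c x) y = cnj c * cinner x y"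
  unfolding cinner_def by (simp add: mult.assoc infsum_cmult_right ell2_prod)
lemma cinner_cmul_right: "cinner x (cmul c y) = c * cinner x y"
  unfolding cinner_def
  by (simp add: mult.left_commute[of "cnj _"] infsum_cmult_right ell2_prod)

lemma Jop_cmul: "blin Jop x = cmul \<i> x"
  by (rule l2_eqI) (simp add: vec_Jop)

lemma cinner_Sp: "cinner (blin Sp x) y = cinner x (blin Sm y)"
proof -
  have "cinner (blin Sp x) y = infsum (\<lambda>n. cnj (vec x (n+1)) * vec y n) UNIV"
    unfolding cinner_def vec_Sp sp_def by simp
  also have "\<dots> = infsum (\<lambda>n. cnj (vec x ((n - 1) + 1)) * vec y (n - 1)) UNIV"
  proof -
    have b: "bij_betw (\<lambda>n. n - 1) UNIV (UNIV::int set)" by (rule bij_betwI[where g="\<lambda>n. n + 1"]) auto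
    show ?thesis using infsum_reindex_bij_betw[OF b, of "\<lambda>n. cnj (vec x (n+1)) * vec y n"] by simp
  qed
  also have "\<dots> = cinner x (blin Sm y)" unfolding cinner_def vec_Sm sm_def by simp
  finally show ?thesis .
qed

lemma cinner_Sm: "cinner (blin Sm x) y = cinner x (blin Sp y)"
proof -
  have "cnj (cinner (blin Sm x) y) = cinner y (blin Sm x)"
    unfolding cinner_def by (subst infsum_cnj[symmetric]) (simp add: mult.commute)
  also have "\<dots> = cinner (blin Sp y) x" by (simp add: cinner_Sp)
  also have "\<dots> = cnj (cinner x (blin Sp y))"
    unfolding cinner_def by (subst infsum_cnj[symmetric]) (simp add: mult.commute)
  finally show ?thesis by simp
qed

lemma cinner_Aop: "cinner (blin Aop x) y = cinner x (blin Aop y)"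
  unfolding Aop_def
  by (simp add: Jop_cmul cinner_cmul_left cinner_cmul_right cinner_diff_left cinner_diff_right
      cinner_Sp cinner_Sm algebra_simps)

lemma inner_cinner: "inner x y = Re (cinner x y)" by (simp add: inner_l2_def)

lemma inner_Aop: "inner (blin Aop x) y = inner x (blin Aop y)"
  by (simp add: inner_cinner cinner_Aop)



lemma schrH_add: "schrH \<nu> (\<lambda>n. \<psi> n + \<phi> n) = (\<lambda>n. schrH \<nu> \<psi> n + schrH \<nu> \<phi> n)"
  unfolding schrH_def by (auto simp: algebra_simps)
lemma schrH_mult: "schrH \<nu> (\<lambda>n. c * \<psi> n) = (\<lambda>n. c * schrH \<nu> \<psi> n)"
  unfolding schrH_def by (auto simp: algebra_simps)
lemma schrH_pow_mult: "(schrH \<nu> ^^ k) (\<lambda>n. c * \<psi> n) = (\<lambda>n. c * (schrH \<nu> ^^ k) \<psi> n)"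
  by (induction k) (auto simp: schrH_mult)

instance l2 :: banach ..

locale schr =
  fixes \<nu> :: "int \<Rightarrow> real"
  assumes bnd: "bounded (range \<nu>)"
begin

definition Mnu :: real where "Mnu = (SOME M. \<forall>n. \<bar>\<nu> n\<bar> \<le> M)"
lemma Mnu: "\<bar>\<nu> n\<bar> \<le> Mnu"
proof -
  have "\<exists>M. \<forall>n. \<bar>\<nu> n\<bar> \<le> M" using bnd unfolding bounded_iff by auto
  thus ?thesis unfolding Mnu_def by (rule someI_ex[where P="\<lambda>M. \<forall>n. \<bar>\<nu> n\<bar> \<le> M", THEN spec])
qed

definition Vop :: "l2 op" where "Vop = mkop (mulf (\<lambda>n. complex_of_real (\<nu> n)))"
lemma vec_Vop: "vec (blin Vop x) = (\<lambda>n. complex_of_real (\<nu> n) * vec x n)"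
  unfolding Vop_def using vec_mkop[OF rawlin_mulf opbound_mulf[of "\<lambda>n. complex_of_real (\<nu> n)" Mnu]] Mnu
  by (simp add: mulf_def)

definition Hop :: "l2 op" where "Hop = Sp + Sm + Vop"
lemma vec_Hop: "vec (blin Hop x) = schrH \<nu> (vec x)"
  unfolding Hop_def schrH_def by (simp add: vec_Sp vec_Sm vec_Vop sp_def sm_def fun_eq_iff)

definition Bop :: "l2 op" where "Bop = - (Jop * Hop)"
lemma vec_Bop: "vec (blin Bop x) = (\<lambda>n. - \<i> * schrH \<nu> (vec x) n)"
  unfolding Bop_def by (simp add: vec_Jop vec_Hop fun_eq_iff)

lemma vec_Bop_pow: "vec (blin (Bop ^ k) x) = (\<lambda>n. (- \<i>) ^ k * (schrH \<nu> ^^ k) (vec x) n)"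
proof (induction k arbitrary: x)
  case 0 thus ?case by simp
next
  case (Suc k)
  have "vec (blin (Bop ^ Suc k) x) = vec (blin Bop (blin (Bop ^ k) x))" by simp
  also have "\<dots> = (\<lambda>n. - \<i> * schrH \<nu> (\<lambda>n. (- \<i>) ^ k * (schrH \<nu> ^^ k) (vec x) n) n)"
    by (simp add: vec_Bop Suc)
  also have "\<dots> = (\<lambda>n. (- \<i>) ^ Suc k * (schrH \<nu> ^^ Suc k) (vec x) n)"
    by (simp add: schrH_mult mult.assoc)
  finally show ?case .
qed

definition U :: "real \<Rightarrow> l2 op" where "U t = exp (t *\<^sub>R Bop)"

lemma bl_comp: "bounded_linear (\<lambda>Z. vec (blin Z x) n)"
  using bounded_linear_compose[OF bounded_linear_vec_comp bounded_linear_blin_app] .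

lemma evol_U:
  assumes "\<psi> \<in> ell2"
  shows "evol \<nu> t \<psi> = vec (blin (U t) (mk_l2 \<psi>))"
proof
  fix n
  let ?x = "mk_l2 \<psi>"
  let ?Y = "t *\<^sub>R Bop"
  have "vec (blin (U t) ?x) n = vec (blin (\<Sum>k. ?Y ^ k /\<^sub>R fact k) ?x) n"
    unfolding U_def exp_def ..
  also have "\<dots> = (\<Sum>k. vec (blin (?Y ^ k /\<^sub>R fact k) ?x) n)"
    by (rule bounded_linear.suminf[OF bl_comp summable_exp_generic])
  also have "\<dots> = (\<Sum>k. (- \<i> * complex_of_real t) ^ k / of_nat (fact k) * ((schrH \<nu> ^^ k) \<psi>) n)"
  proof (rule suminf_cong)
    fix k
    have "vec (blin (?Y ^ k /\<^sub>R fact k) ?x) n = complex_of_real (t ^ k / fact k) * vec (blin (Bop ^ k) ?x) n"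
      by (simp add: scaleR_power divide_inverse_commute)
    also have "\<dots> = (- \<i> * complex_of_real t) ^ k / of_nat (fact k) * ((schrH \<nu> ^^ k) \<psi>) n"
      unfolding power_mult_distrib[of "- \<i>" "complex_of_real t" k]
      using assms by (simp add: vec_Bop_pow field_simps)
    finally show "vec (blin (?Y ^ k /\<^sub>R fact k) ?x) n = (- \<i> * complex_of_real t) ^ k / of_nat (fact k) * ((schrH \<nu> ^^ k) \<psi>) n" .
  qed
  finally show "evol \<nu> t \<psi> n = vec (blin (U t) ?x) n" unfolding evol_def by simp
qed

lemma U_add: "U s * U t = U (s + t)"
  unfolding U_def by (simp add: exp_add_commuting[symmetric] scaleR_add_left)
lemma U_zero: "U 0 = 1" unfolding U_def by simp
lemma U_inv: "blin (U (- t)) (blin (U t) x) = x"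
proof -
  have "blin (U (-t)) (blin (U t) x) = blin (U (-t) * U t) x" by simp
  also have "\<dots> = x" by (simp add: U_add U_zero)
  finally show ?thesis .
qed
lemma U_inv': "blin (U t) (blin (U (- t)) x) = x" using U_inv[of "-t"] by simp

lemma U_deriv: "((\<lambda>t. blin (U t) x) has_vector_derivative blin Bop (blin (U t) x)) (at t within S)"
proof -
  have "((\<lambda>t. U t) has_vector_derivative Bop * U t) (at t)"
    unfolding U_def by (rule exp_scaleR_has_vector_derivative_left)
  hence "((\<lambda>t. U t) has_vector_derivative Bop * U t) (at t within S)"
    by (rule has_vector_derivative_at_within)
  from bounded_linear.has_vector_derivative[OF bounded_linear_blin_app this, of x]
  show ?thesis by simp
qed

lemma cinner_Vop: "cinner (blin Vop x) y = cinner x (blin Vop y)"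
  unfolding cinner_def vec_Vop by (simp add: mult_ac)

lemma cinner_Hop: "cinner (blin Hop x) y = cinner x (blin Hop y)"
  unfolding Hop_def by (simp add: cinner_add_left cinner_add_right cinner_Sp cinner_Sm cinner_Vop)

lemma Bop_cmul: "blin Bop x = cmul (- \<i>) (blin Hop x)"
  by (rule l2_eqI) (simp add: vec_Bop vec_Hop)

lemma Bop_skew: "inner (blin Bop x) y + inner x (blin Bop y) = 0"
  unfolding inner_cinner Bop_cmul cinner_cmul_left cinner_cmul_right cinner_Hop
  by simp

lemma U_inner: "inner (blin (U t) x) (blin (U t) y) = inner x y"
proof -
  let ?f = "\<lambda>t. inner (blin (U t) x) (blin (U t) y)"
  have "(?f has_vector_derivative 0) (at s)" for s
  proof -
    have "(?f has_vector_derivative (inner (blin (U s) x) (blin Bop (blin (U s) y)) + inner (blin Bop (blin (U s) x)) (blin (U s) y))) (at s)"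
      by (rule bounded_bilinear.has_vector_derivative[OF bounded_bilinear_inner U_deriv U_deriv])
    thus ?thesis using Bop_skew[of "blin (U s) x" "blin (U s) y"] by (simp add: add.commute)
  qed
  hence "\<And>s. (?f has_real_derivative 0) (at s)"
    by (simp add: has_real_derivative_iff_has_vector_derivative)
  hence "?f t = ?f 0" using DERIV_isconst_all by blast
  thus ?thesis by (simp add: U_zero)
qed

lemma U_norm [simp]: "norm (blin (U t) x) = norm x"
  using U_inner[of t x x] by (simp add: norm_eq_sqrt_inner)

lemma U_adj: "inner (blin (U (- t)) u) v = inner u (blin (U t) v)"
proof -
  have "inner (blin (U (- t)) u) v = inner (blin (U t) (blin (U (- t)) u)) (blin (U t) v)"
    by (rule U_inner[symmetric])
  thus ?thesis by (simp add: U_inv')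
qed

end


lemma bb_blin: "bounded_bilinear (\<lambda>(A::'a::real_normed_vector op) v. blin A v)"
proof (rule bounded_bilinear.intro)
  fix A B :: "'a op" and a b :: 'a and r :: real
  show "blin (A + B) a = blin A a + blin B a" by simp
  show "blin A (a + b) = blin A a + blin A b" by (simp add: blinfun.add_right)
  show "blin (r *\<^sub>R A) a = r *\<^sub>R blin A a" by simp
  show "blin A (r *\<^sub>R a) = r *\<^sub>R blin A a" by (simp add: blinfun.scaleR_right)
  show "\<exists>K. \<forall>a b. norm (blin a b) \<le> norm a * norm b * K"
    by (rule exI[of _ 1]) (simp add: norm_blin)
qed

lemma norm_Sp: "norm (blin Sp v) \<le> norm v"
  using opbound_sp unfolding opbound_def by (simp add: norm_l2norm vec_Sp)
lemma norm_Sm: "norm (blin Sm v) \<le> norm v"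
  using opbound_sm unfolding opbound_def by (simp add: norm_l2norm vec_Sm)
lemma norm_cmul_i: "norm (cmul \<i> v) = norm v"
  unfolding norm_l2norm l2norm_def by (simp add: norm_mult)
lemma norm_Aop: "norm (blin Aop v) \<le> 2 * norm v"
proof -
  have "norm (blin Aop v) = norm (blin Sp v - blin Sm v)"
    unfolding Aop_def by (simp add: Jop_cmul norm_cmul_i)
  also have "\<dots> \<le> norm (blin Sp v) + norm (blin Sm v)" by (rule norm_triangle_ineq4)
  also have "\<dots> \<le> 2 * norm v" using norm_Sp[of v] norm_Sm[of v] by simp
  finally show ?thesis .
qed

context schr begin

lemma U_neg: "U (- t) = exp (t *\<^sub>R (- Bop))"
  unfolding U_def by simp

lemma U_cont_op: "continuous_on S U"
proof -
  have "(U has_vector_derivative Bop * U t) (at t within S)" for t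
    unfolding U_def using exp_scaleR_has_vector_derivative_left has_vector_derivative_at_within by blast
  thus ?thesis using has_vector_derivative_continuous continuous_at_imp_continuous_on
    by (metis continuous_on_eq_continuous_within)
qed

definition h :: "l2 \<Rightarrow> real \<Rightarrow> l2" where
  "h x t = blin (U (- t)) (blin Aop (blin (U t) x))"

lemma h_cont: "continuous_on S (h x)"
proof -
  have c1: "continuous_on S (\<lambda>t. U (- t))"
    using continuous_on_compose2[OF U_cont_op[of UNIV] continuous_on_minus[OF continuous_on_id]] by auto
  have c2: "continuous_on S (\<lambda>t. blin Aop (blin (U t) x))"
    apply (rule continuous_on_compose2[of UNIV "\<lambda>v. blin Aop v"])
      apply (simp add: linear_continuous_on blinfun.bounded_linear_right)
     apply (rule bounded_bilinear.continuous_on[OF bb_blin U_cont_op continuous_on_const])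
    by simp
  show ?thesis unfolding h_def
    by (rule bounded_bilinear.continuous_on[OF bb_blin c1 c2])
qed

lemma h_int: "h x integrable_on {a..b}"
  by (rule integrable_continuous_interval[OF h_cont])

lemma heis_h:
  assumes "\<psi> \<in> ell2"
  shows "heis \<nu> t \<psi> = vec (h (mk_l2 \<psi>) t)"
proof -
  have "evol \<nu> t \<psi> = vec (blin (U t) (mk_l2 \<psi>))" by (rule evol_U[OF assms])
  hence "opA (evol \<nu> t \<psi>) = vec (blin Aop (blin (U t) (mk_l2 \<psi>)))" by (simp add: vec_Aop)
  hence "evol \<nu> (-t) (opA (evol \<nu> t \<psi>)) = vec (h (mk_l2 \<psi>) t)"
    by (simp add: evol_U vec_inverse h_def)
  thus ?thesis unfolding heis_def .
qed

definition Tav :: "real \<Rightarrow> l2 \<Rightarrow> l2" where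
  "Tav T x = (1 / T) *\<^sub>R integral {0..T} (h x)"

lemma tavg_Tav:
  assumes "\<psi> \<in> ell2"
  shows "tavg \<nu> T \<psi> = vec (Tav T (mk_l2 \<psi>))"
proof
  fix n
  have "integral {0..T} (\<lambda>t. heis \<nu> t \<psi> n) = integral {0..T} ((\<lambda>v. vec v n) \<circ> h (mk_l2 \<psi>))"
    by (simp add: heis_h[OF assms] o_def)
  also have "\<dots> = vec (integral {0..T} (h (mk_l2 \<psi>))) n"
    by (rule integral_linear[OF h_int bounded_linear_vec_comp])
  finally show "tavg \<nu> T \<psi> n = vec (Tav T (mk_l2 \<psi>)) n"
    unfolding tavg_def Tav_def by simp
qed

lemma h_add: "h (x + y) t = h x t + h y t"
  unfolding h_def by (simp add: blinfun.add_right)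
lemma h_scaleR: "h (r *\<^sub>R x) t = r *\<^sub>R h x t"
  unfolding h_def by (simp add: blinfun.scaleR_right)

lemma Tav_add: "Tav T (x + y) = Tav T x + Tav T y"
  unfolding Tav_def h_add by (simp add: integral_add[OF h_int h_int] scaleR_add_right)
lemma Tav_scaleR: "Tav T (r *\<^sub>R x) = r *\<^sub>R Tav T x"
  unfolding Tav_def h_scaleR by simp

lemma norm_h: "norm (h x t) \<le> 2 * norm x"
  unfolding h_def using norm_Aop[of "blin (U t) x"] by simp

lemma norm_Tav: "T > 0 \<Longrightarrow> norm (Tav T x) \<le> 2 * norm x"
proof -
  assume T: "T > 0"
  have "norm (integral {0..T} (h x)) \<le> integral {0..T} (\<lambda>_. 2 * norm x)"
    by (rule integral_norm_bound_integral[OF h_int]) (auto simp: norm_h)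
  also have "\<dots> = T * (2 * norm x)" using T by simp
  finally show ?thesis unfolding Tav_def using T by (simp add: field_simps)
qed

lemma inner_h: "inner (h x t) y = inner x (h y t)"
proof -
  have "inner (h x t) y = inner (blin Aop (blin (U t) x)) (blin (U t) y)"
    unfolding h_def by (rule U_adj)
  also have "\<dots> = inner (blin (U t) x) (blin Aop (blin (U t) y))" by (rule inner_Aop)
  also have "\<dots> = inner x (h y t)"
    unfolding h_def using U_adj[of "-t" x] by simp
  finally show ?thesis .
qed

lemma inner_Tav: "inner (Tav T x) y = inner x (Tav T y)"
proof -
  have "inner (integral {0..T} (h x)) y = integral {0..T} ((\<lambda>z. inner z y) \<circ> h x)"
    by (rule integral_linear[OF h_int bounded_linear_inner_left, symmetric])
  also have "\<dots> = integral {0..T} ((\<lambda>z. inner x z) \<circ> h y)"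
    by (simp add: o_def inner_h)
  also have "\<dots> = inner x (integral {0..T} (h y))"
    by (rule integral_linear[OF h_int bounded_linear_inner_right])
  finally show ?thesis unfolding Tav_def by simp
qed

end


lemma exp_sums_lin:
  fixes Y :: "'a::{banach,perfect_space} op"
  assumes "bounded_linear g"
  shows "(\<lambda>k. g (Y ^ k /\<^sub>R fact k)) sums g (exp Y)"
  by (rule bounded_linear.sums[OF assms exp_converges])

definition Xr :: "(int\<Rightarrow>complex) \<Rightarrow> (int\<Rightarrow>complex)" where "Xr \<psi> = (\<lambda>n. of_int n * \<psi> n)"

context schr begin

definition braw :: "(int\<Rightarrow>complex) \<Rightarrow> (int\<Rightarrow>complex)" where "braw \<psi> = (\<lambda>n. - \<i> * schrH \<nu> \<psi> n)"
definition bpow :: "nat \<Rightarrow> (int\<Rightarrow>complex) \<Rightarrow> (int\<Rightarrow>complex)" where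
  "bpow k \<psi> = (\<lambda>n. (- \<i>) ^ k * (schrH \<nu> ^^ k) \<psi> n)"

fun dr :: "nat \<Rightarrow> (int\<Rightarrow>complex) \<Rightarrow> (int\<Rightarrow>complex)" where
  "dr 0 \<psi> = (\<lambda>n. 0)"
| "dr (Suc k) \<psi> = (\<lambda>n. braw (dr k \<psi>) n + opA (bpow k \<psi>) n)"

lemma braw_add: "braw (\<lambda>n. \<psi> n + \<phi> n) = (\<lambda>n. braw \<psi> n + braw \<phi> n)"
  unfolding braw_def schrH_add by (simp add: algebra_simps)

lemma bpow_Suc: "bpow (Suc k) \<psi> = braw (bpow k \<psi>)"
  unfolding bpow_def braw_def by (simp add: schrH_mult mult.assoc)

lemma comm1: "Xr (braw \<psi>) = (\<lambda>n. braw (Xr \<psi>) n + opA \<psi> n)"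
  unfolding Xr_def braw_def schrH_def opA_def by (auto simp: algebra_simps)

lemma commk: "Xr (bpow k \<psi>) = (\<lambda>n. bpow k (Xr \<psi>) n + dr k \<psi> n)"
proof (induction k)
  case 0 thus ?case by (simp add: bpow_def Xr_def)
next
  case (Suc k)
  have "Xr (bpow (Suc k) \<psi>) = (\<lambda>n. braw (Xr (bpow k \<psi>)) n + opA (bpow k \<psi>) n)"
    by (simp add: bpow_Suc comm1)
  also have "\<dots> = (\<lambda>n. braw (bpow k (Xr \<psi>)) n + braw (dr k \<psi>) n + opA (bpow k \<psi>) n)"
    by (simp add: Suc braw_add)
  also have "\<dots> = (\<lambda>n. bpow (Suc k) (Xr \<psi>) n + dr (Suc k) \<psi> n)"
    by (simp add: bpow_Suc add.assoc)
  finally show ?case .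
qed

definition Mf :: "l2 \<times> l2 \<Rightarrow> l2 \<times> l2" where
  "Mf p = (blin Bop (fst p) + blin Aop (snd p), blin Bop (snd p))"

lemma Mf_bl: "bounded_linear Mf"
  unfolding Mf_def
  by (intro bounded_linear_Pair bounded_linear_add
      bounded_linear_compose[OF blinfun.bounded_linear_right] bounded_linear_fst bounded_linear_snd)

definition Mop :: "(l2 \<times> l2) op" where "Mop = Op (Blinfun Mf)"

lemma blin_Mop: "blin Mop p = Mf p"
  unfolding Mop_def by (rule blin_Op[OF Mf_bl])

fun dk :: "nat \<Rightarrow> l2 \<Rightarrow> l2" where
  "dk 0 x = 0"
| "dk (Suc k) x = blin Bop (dk k x) + blin Aop (blin (Bop ^ k) x)"

lemma Mpow: "blin (Mop ^ k) (0, x) = (dk k x, blin (Bop ^ k) x)"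
  by (induction k) (simp_all add: blin_Mop Mf_def)

lemma vec_Bop_pow': "vec (blin (Bop ^ k) x) = bpow k (vec x)"
  unfolding bpow_def by (rule vec_Bop_pow)

lemma vec_dk: "vec (dk k x) = dr k (vec x)"
proof (induction k)
  case 0 thus ?case by (simp add: fun_eq_iff)
next
  case (Suc k)
  thus ?case by (simp add: vec_Bop vec_Aop vec_Bop_pow' braw_def Suc.IH)
qed

definition Phi :: "real \<Rightarrow> l2 \<Rightarrow> l2 \<times> l2" where
  "Phi t x = blin (exp (t *\<^sub>R Mop)) (0, x)"

lemma U_sums: "(\<lambda>k. vec (blin ((t *\<^sub>R Bop) ^ k /\<^sub>R fact k) x) n) sums vec (blin (U t) x) n"
  unfolding U_def by (rule exp_sums_lin[OF bl_comp])

lemma U_sums': "(\<lambda>k. complex_of_real (t ^ k / fact k) * bpow k (vec x) n) sums vec (blin (U t) x) n"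
  using U_sums[of t x n] by (simp add: scaleR_power vec_Bop_pow' divide_inverse_commute)

lemma bl_fst_comp: "bounded_linear (\<lambda>Z. vec (fst (blin Z (0::l2, x))) n)"
  by (intro bounded_linear_compose[OF bounded_linear_vec_comp] bounded_linear_compose[OF bounded_linear_fst]
      bounded_linear_blin_app)

lemma bl_snd_comp: "bounded_linear (\<lambda>Z. snd (blin Z (0::l2, x)))"
  by (intro bounded_linear_compose[OF bounded_linear_snd] bounded_linear_blin_app)

lemma G_sums: "(\<lambda>k. complex_of_real (t ^ k / fact k) * dr k (vec x) n) sums vec (fst (Phi t x)) n"
  using exp_sums_lin[OF bl_fst_comp, of "t *\<^sub>R Mop" x n]
  unfolding Phi_def by (simp add: scaleR_power Mpow vec_dk divide_inverse_commute)

lemma snd_Phi: "snd (Phi t x) = blin (U t) x"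
proof -
  have "(\<lambda>k. snd (blin ((t *\<^sub>R Mop) ^ k /\<^sub>R fact k) (0, x))) sums snd (Phi t x)"
    unfolding Phi_def by (rule exp_sums_lin[OF bl_snd_comp])
  moreover have "(\<lambda>k. snd (blin ((t *\<^sub>R Mop) ^ k /\<^sub>R fact k) (0, x))) = (\<lambda>k. blin ((t *\<^sub>R Bop) ^ k /\<^sub>R fact k) x)"
    by (simp add: scaleR_power Mpow)
  moreover have "(\<lambda>k. blin ((t *\<^sub>R Bop) ^ k /\<^sub>R fact k) x) sums blin (U t) x"
    unfolding U_def by (rule exp_sums_lin[OF bounded_linear_blin_app])
  ultimately show ?thesis using sums_unique2 by metis
qed

lemma X_comp:
  assumes "Xr (vec x) \<in> ell2"
  shows "of_int n * vec (blin (U t) x) n = vec (blin (U t) (mk_l2 (Xr (vec x)))) n + vec (fst (Phi t x)) n"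
proof -
  let ?c = "\<lambda>k. complex_of_real (t ^ k / fact k)"
  have s1: "(\<lambda>k. of_int n * (?c k * bpow k (vec x) n)) sums (of_int n * vec (blin (U t) x) n)"
    by (rule sums_mult[OF U_sums'])
  have s2: "(\<lambda>k. ?c k * bpow k (Xr (vec x)) n + ?c k * dr k (vec x) n) sums
      (vec (blin (U t) (mk_l2 (Xr (vec x)))) n + vec (fst (Phi t x)) n)"
    using sums_add[OF U_sums'[of t "mk_l2 (Xr (vec x))" n] G_sums[of t x n]] assms by simp
  have eq: "of_int n * (?c k * bpow k (vec x) n) = ?c k * bpow k (Xr (vec x)) n + ?c k * dr k (vec x) n" for k
  proof -
    have "of_int n * bpow k (vec x) n = Xr (bpow k (vec x)) n" by (simp add: Xr_def)
    also have "\<dots> = bpow k (Xr (vec x)) n + dr k (vec x) n" by (simp add: commk)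
    finally show ?thesis by (metis (no_types, lifting) distrib_left mult.left_commute)
  qed
  show ?thesis using s1 s2 unfolding eq using sums_unique2 by blast
qed

lemma Phi_deriv: "((\<lambda>t. Phi t x) has_vector_derivative Mf (Phi t x)) (at t within S)"
proof -
  have "((\<lambda>t. exp (t *\<^sub>R Mop)) has_vector_derivative Mop * exp (t *\<^sub>R Mop)) (at t within S)"
    using exp_scaleR_has_vector_derivative_left has_vector_derivative_at_within by blast
  from bounded_linear.has_vector_derivative[OF bounded_linear_blin_app this, of "(0, x)"]
  show ?thesis unfolding Phi_def by (simp add: blin_Mop)
qed

lemma G_deriv: "((\<lambda>t. fst (Phi t x)) has_vector_derivative
    blin Bop (fst (Phi t x)) + blin Aop (blin (U t) x)) (at t within S)"
  using bounded_linear.has_vector_derivative[OF bounded_linear_fst Phi_deriv[of x t S]]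
  by (simp add: Mf_def snd_Phi)

lemma Uneg_deriv: "((\<lambda>t. U (- t)) has_vector_derivative U (- t) * (- Bop)) (at t within S)"
  unfolding U_neg using exp_scaleR_has_vector_derivative_right .

lemma Psi_deriv: "((\<lambda>t. blin (U (- t)) (fst (Phi t x))) has_vector_derivative h x t) (at t within S)"
proof -
  have "((\<lambda>t. blin (U (- t)) (fst (Phi t x))) has_vector_derivative
      blin (U (- t)) (blin Bop (fst (Phi t x)) + blin Aop (blin (U t) x)) + blin (U (- t) * (- Bop)) (fst (Phi t x))) (at t within S)"
    by (rule bounded_bilinear.has_vector_derivative[OF bb_blin Uneg_deriv G_deriv])
  thus ?thesis by (simp add: h_def blinfun.add_right blinfun.minus_right)
qed

lemma Phi0: "fst (Phi 0 x) = 0" unfolding Phi_def by simp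

lemma Duhamel:
  assumes "T \<ge> 0"
  shows "blin (U (- T)) (fst (Phi T x)) = integral {0..T} (h x)"
proof -
  have "(h x has_integral (blin (U (- T)) (fst (Phi T x)) - blin (U (- 0)) (fst (Phi 0 x)))) {0..T}"
    by (rule fundamental_theorem_of_calculus[OF assms Psi_deriv])
  thus ?thesis by (simp add: Phi0 integral_unique)
qed

lemma X_U:
  assumes "Xr (vec x) \<in> ell2" "T > 0"
  shows "(\<lambda>n. of_int n * vec (blin (U T) x) n) = vec (blin (U T) (mk_l2 (Xr (vec x)) + T *\<^sub>R Tav T x))"
proof -
  have "fst (Phi T x) = blin (U T) (integral {0..T} (h x))"
    using Duhamel[of T x] assms U_inv'[of T "fst (Phi T x)"] by simp
  also have "integral {0..T} (h x) = T *\<^sub>R Tav T x" using assms unfolding Tav_def by simp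
  finally have "fst (Phi T x) = blin (U T) (T *\<^sub>R Tav T x)" .
  thus ?thesis using X_comp[OF assms(1)] by (simp add: fun_eq_iff blinfun.add_right)
qed

end


locale schrQ = schr +
  fixes T :: "nat \<Rightarrow> real" and Q :: "(int \<Rightarrow> complex) \<Rightarrow> (int \<Rightarrow> complex)"
  assumes Tlim: "filterlim T at_top sequentially"
    and hyp: "\<forall>\<psi>\<in>ell2. Q \<psi> \<in> ell2 \<and> (\<lambda>k. l2norm (\<lambda>n. tavg \<nu> (T k) \<psi> n - Q \<psi> n)) \<longlonglongrightarrow> 0"
begin

definition qv :: "l2 \<Rightarrow> l2" where "qv x = mk_l2 (Q (vec x))"

lemma Q_ell2: "Q (vec x) \<in> ell2" using hyp by auto

lemma vec_qv: "vec (qv x) = Q (vec x)" unfolding qv_def by (simp add: Q_ell2)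

lemma Tav_lim: "(\<lambda>k. Tav (T k) x) \<longlonglongrightarrow> qv x"
proof -
  have "(\<lambda>k. l2norm (\<lambda>n. tavg \<nu> (T k) (vec x) n - Q (vec x) n)) \<longlonglongrightarrow> 0" using hyp by auto
  moreover have "l2norm (\<lambda>n. tavg \<nu> (T k) (vec x) n - Q (vec x) n) = norm (Tav (T k) x - qv x)" for k
  proof -
    have "vec (Tav (T k) x - qv x) = (\<lambda>n. tavg \<nu> (T k) (vec x) n - Q (vec x) n)"
      by (simp add: fun_eq_iff tavg_Tav vec_inverse vec_qv)
    thus ?thesis by (simp add: norm_l2norm)
  qed
  ultimately have "(\<lambda>k. norm (Tav (T k) x - qv x)) \<longlonglongrightarrow> 0" by simp
  thus ?thesis by (rule LIM_zero_cancel[OF tendsto_norm_zero_cancel])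
qed

lemma T_ev: "\<forall>\<^sub>F k in sequentially. T k \<ge> c"
  using Tlim unfolding filterlim_at_top by blast

lemma qv_add: "qv (x + y) = qv x + qv y"
proof -
  have "(\<lambda>k. Tav (T k) (x + y)) \<longlonglongrightarrow> qv x + qv y"
    unfolding Tav_add by (intro tendsto_add Tav_lim)
  thus ?thesis by (rule LIMSEQ_unique[OF Tav_lim])
qed

lemma qv_scaleR: "qv (r *\<^sub>R x) = r *\<^sub>R qv x"
proof -
  have "(\<lambda>k. Tav (T k) (r *\<^sub>R x)) \<longlonglongrightarrow> r *\<^sub>R qv x"
    unfolding Tav_scaleR by (intro tendsto_scaleR tendsto_const Tav_lim)
  thus ?thesis by (rule LIMSEQ_unique[OF Tav_lim])
qed

lemma qv_diff: "qv (x - y) = qv x - qv y"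
  using qv_add[of "x - y" y] by simp

lemma qv_zero: "qv 0 = 0" using qv_scaleR[of 0 0] by simp

lemma qv_bound: "norm (qv x) \<le> 2 * norm x"
proof -
  have "(\<lambda>k. norm (Tav (T k) x)) \<longlonglongrightarrow> norm (qv x)" by (intro tendsto_norm Tav_lim)
  moreover have "\<forall>\<^sub>F k in sequentially. norm (Tav (T k) x) \<le> 2 * norm x"
    using T_ev[of 1] by eventually_elim (simp add: norm_Tav)
  ultimately show ?thesis by (rule tendsto_upperbound) simp
qed

lemma qv_sym: "inner (qv x) y = inner x (qv y)"
proof -
  have "(\<lambda>k. inner (Tav (T k) x) y) \<longlonglongrightarrow> inner (qv x) y" by (intro tendsto_inner Tav_lim tendsto_const)
  moreover have "(\<lambda>k. inner x (Tav (T k) y)) \<longlonglongrightarrow> inner x (qv y)" by (intro tendsto_inner Tav_lim tendsto_const)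
  ultimately show ?thesis unfolding inner_Tav by (rule LIMSEQ_unique)
qed

definition m :: real where "m = opnorm Q"

definition NS :: "real set" where "NS = (\<lambda>x. norm (qv x)) ` {x. norm x \<le> 1}"

lemma opnorm_NS: "opnorm Q = Sup NS"
proof -
  have "{l2norm (Q \<psi>) | \<psi>. \<psi> \<in> ell2 \<and> l2norm \<psi> \<le> 1} = NS"
  proof (intro set_eqI iffI)
    fix r assume "r \<in> {l2norm (Q \<psi>) | \<psi>. \<psi> \<in> ell2 \<and> l2norm \<psi> \<le> 1}"
    then obtain \<psi> where p: "\<psi> \<in> ell2" "l2norm \<psi> \<le> 1" "r = l2norm (Q \<psi>)" by auto
    hence "r = norm (qv (mk_l2 \<psi>))" "norm (mk_l2 \<psi>) \<le> 1"
      by (simp_all add: norm_l2norm vec_qv)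
    thus "r \<in> NS" unfolding NS_def by blast
  next
    fix r assume "r \<in> NS"
    then obtain x where "norm x \<le> 1" "r = norm (qv x)" unfolding NS_def by auto
    thus "r \<in> {l2norm (Q \<psi>) | \<psi>. \<psi> \<in> ell2 \<and> l2norm \<psi> \<le> 1}"
      by (intro CollectI exI[of _ "vec x"]) (simp add: norm_l2norm vec_qv)
  qed
  thus ?thesis unfolding opnorm_def by simp
qed

lemma NS_bdd: "bdd_above NS"
proof (rule bdd_aboveI)
  fix r assume "r \<in> NS"
  then obtain x where x: "norm x \<le> 1" "r = norm (qv x)" unfolding NS_def by auto
  thus "r \<le> 2" using qv_bound[of x] by linarith
qed

lemma zero_NS: "0 \<in> NS"
proof -
  have "(0::l2) \<in> {x. norm x \<le> 1}" by simp
  hence "norm (qv 0) \<in> NS" unfolding NS_def by (rule imageI)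
  thus ?thesis by (simp add: qv_zero)
qed

lemma NS_ne: "NS \<noteq> {}" using zero_NS by blast

lemma m_nonneg: "m \<ge> 0"
  unfolding m_def opnorm_NS by (rule cSup_upper[OF zero_NS NS_bdd])

lemma qv_le_m: "norm (qv x) \<le> m * norm x"
proof (cases "x = 0")
  case True thus ?thesis by (simp add: qv_zero)
next
  case False
  let ?u = "(1 / norm x) *\<^sub>R x"
  have "norm ?u = 1" using False by simp
  hence "norm (qv ?u) \<le> m" unfolding m_def opnorm_NS using NS_bdd
    by (intro cSup_upper) (auto simp: NS_def)
  moreover have "qv x = norm x *\<^sub>R qv ?u" using False by (simp add: qv_scaleR)
  hence "norm (qv x) = norm x * norm (qv ?u)" by simp
  ultimately show ?thesis by (metis mult.commute mult_left_mono norm_ge_zero)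
qed

lemma m_approx: "\<delta> > 0 \<Longrightarrow> \<exists>x. norm x \<le> 1 \<and> norm (qv x) > m - \<delta>"
proof -
  assume "\<delta> > 0"
  hence "m - \<delta> < Sup NS" unfolding m_def opnorm_NS by simp
  then obtain r where "r \<in> NS" "m - \<delta> < r" using less_cSup_iff[OF NS_ne NS_bdd] by blast
  thus ?thesis unfolding NS_def by auto
qed

end


lemma norm_diff_sq: "(norm (a - b))\<^sup>2 = (norm a)\<^sup>2 - 2 * inner a b + (norm (b::'a::real_inner))\<^sup>2"
  by (simp add: power2_norm_eq_inner inner_diff_left inner_diff_right inner_commute)

definition trunc :: "int \<Rightarrow> l2 \<Rightarrow> l2" where
  "trunc N x = mk_l2 (\<lambda>n. if \<bar>n\<bar> \<le> N then vec x n else 0)"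

lemma fin_ell2: "finite {n. \<psi> n \<noteq> 0} \<Longrightarrow> \<psi> \<in> ell2"
  unfolding ell2_def by (auto intro!: finite_nonzero_values_imp_summable_on elim!: finite_subset[rotated])

lemma trunc_ell2: "(\<lambda>n. if \<bar>n\<bar> \<le> N then \<psi> n else 0) \<in> ell2"
  by (rule fin_ell2) (rule finite_subset[of _ "{-N..N}"], auto)

lemma vec_trunc: "vec (trunc N x) = (\<lambda>n. if \<bar>n\<bar> \<le> N then vec x n else 0)"
  unfolding trunc_def by (simp add: trunc_ell2)

lemma trunc_approx:
  assumes "\<epsilon> > 0"
  shows "\<exists>N. norm (x - trunc N x) \<le> \<epsilon>"
proof -
  let ?f = "\<lambda>n. (cmod (vec x n))\<^sup>2"
  have hs: "(?f has_sum infsum ?f UNIV) UNIV" using vec_sq_summable by (rule has_sum_infsum)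
  obtain F where F: "finite F" "dist (sum ?f F) (infsum ?f UNIV) \<le> \<epsilon>\<^sup>2"
    using has_sum_finite_approximation[OF hs, of "\<epsilon>\<^sup>2"] assms by auto
  define N where "N = Max (insert 0 (abs ` F))"
  have FN: "F \<subseteq> {-N..N}"
  proof
    fix n assume "n \<in> F"
    hence "\<bar>n\<bar> \<le> N" unfolding N_def using F(1) by (intro Max_ge) auto
    thus "n \<in> {-N..N}" by auto
  qed
  let ?g = "\<lambda>n. if \<bar>n\<bar> \<le> N then ?f n else 0"
  let ?h = "\<lambda>n. if \<bar>n\<bar> \<le> N then 0 else ?f n"
  have sg: "?g summable_on UNIV"
    by (rule summable_on_comparison_test[OF vec_sq_summable]) auto
  have sh: "?h summable_on UNIV"
    by (rule summable_on_comparison_test[OF vec_sq_summable]) auto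
  have "infsum ?f UNIV = infsum (\<lambda>n. ?g n + ?h n) UNIV" by (rule infsum_cong) auto
  also have "\<dots> = infsum ?g UNIV + infsum ?h UNIV" by (rule infsum_add[OF sg sh])
  also have "infsum ?g UNIV = infsum ?f {-N..N}"
    by (rule infsum_cong_neutral) auto
  also have "\<dots> = sum ?f {-N..N}" by simp
  finally have split: "infsum ?h UNIV = infsum ?f UNIV - sum ?f {-N..N}" by simp
  have "sum ?f F \<le> sum ?f {-N..N}" by (rule sum_mono2[OF _ FN]) auto
  moreover have "sum ?f F \<le> infsum ?f UNIV"
    by (rule finite_sum_le_infsum[OF vec_sq_summable F(1)]) auto
  ultimately have "infsum ?h UNIV \<le> \<epsilon>\<^sup>2" using F(2) split by (simp add: dist_real_def)
  moreover have "(norm (x - trunc N x))\<^sup>2 = infsum ?h UNIV"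
    unfolding norm_sq_l2 by (rule infsum_cong) (simp add: vec_trunc)
  ultimately have "(norm (x - trunc N x))\<^sup>2 \<le> \<epsilon>\<^sup>2" by simp
  hence "norm (x - trunc N x) \<le> \<epsilon>" by (rule power2_le_imp_le) (use assms in simp)
  thus ?thesis by blast
qed

context schrQ begin

lemma approx_eig:
  assumes "\<eta> > 0"
  shows "\<exists>u a. norm u = 1 \<and> \<bar>a\<bar> = m \<and> norm (qv u - a *\<^sub>R u) \<le> \<eta>"
proof (cases "m = 0")
  case True
  let ?u = "(1 / norm e0) *\<^sub>R e0"
  have "norm ?u = 1" using e0_nz by simp
  moreover have "norm (qv ?u) \<le> 0" using qv_le_m[of ?u] True by simp
  ultimately show ?thesis using True assms by (intro exI[of _ ?u] exI[of _ 0]) auto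
next
  case False
  hence mpos: "m > 0" using m_nonneg by simp
  define \<delta> where "\<delta> = min (m/2) (\<eta>\<^sup>2 / (8 * m))"
  have dpos: "\<delta> > 0" unfolding \<delta>_def using mpos assms by simp
  obtain x where x: "norm x \<le> 1" "norm (qv x) > m - \<delta>" using m_approx[OF dpos] by blast
  define y where "y = qv x"
  have dm: "\<delta> \<le> m/2" "\<delta> \<le> \<eta>\<^sup>2 / (8 * m)" unfolding \<delta>_def by auto
  have ny: "norm y \<ge> m - \<delta>" using x unfolding y_def by simp
  have ny2: "norm y \<ge> m/2" using ny dm by simp
  define w where "w = qv y - (m\<^sup>2) *\<^sub>R x"
  have "(norm w)\<^sup>2 = (norm (qv y))\<^sup>2 - 2 * inner (qv y) ((m\<^sup>2) *\<^sub>R x) + (norm ((m\<^sup>2) *\<^sub>R x))\<^sup>2"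
    unfolding w_def by (rule norm_diff_sq)
  also have "inner (qv y) ((m\<^sup>2) *\<^sub>R x) = m\<^sup>2 * (norm y)\<^sup>2"
    by (simp add: qv_sym y_def power2_norm_eq_inner)
  also have "(norm ((m\<^sup>2) *\<^sub>R x))\<^sup>2 = m^4 * (norm x)\<^sup>2"
    by (simp add: power_mult_distrib)
  finally have w1: "(norm w)\<^sup>2 = (norm (qv y))\<^sup>2 - 2 * (m\<^sup>2 * (norm y)\<^sup>2) + m^4 * (norm x)\<^sup>2" .
  have "(norm (qv y))\<^sup>2 \<le> (m * norm y)\<^sup>2"
    using qv_le_m[of y] by (intro power_mono) auto
  hence a1: "(norm (qv y))\<^sup>2 \<le> m\<^sup>2 * (norm y)\<^sup>2" by (simp add: power_mult_distrib)
  have nx2: "(norm x)\<^sup>2 \<le> 1" using x(1) by (intro power_le_one) auto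
  have a2: "m^4 * (norm x)\<^sup>2 \<le> m^4"
    using mult_left_mono[OF nx2, of "m^4"] mpos by simp
  have a3: "(m - \<delta>)\<^sup>2 \<le> (norm y)\<^sup>2" using ny dm mpos by (intro power_mono) auto
  have "(norm w)\<^sup>2 \<le> m^4 - m\<^sup>2 * (norm y)\<^sup>2" using w1 a1 a2 by linarith
  also have "\<dots> \<le> m^4 - m\<^sup>2 * (m - \<delta>)\<^sup>2"
    using a3 by (simp add: mult_left_mono)
  also have "\<dots> = m\<^sup>2 * (2 * m * \<delta> - \<delta>\<^sup>2)" by (simp add: power2_eq_square power4_eq_xxxx algebra_simps)
  also have "\<dots> \<le> m\<^sup>2 * (2 * m * \<delta>)" using mpos by (simp add: mult_left_mono)
  also have "\<dots> \<le> m\<^sup>2 * (2 * m * (\<eta>\<^sup>2 / (8 * m)))"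
    using dm mpos by (intro mult_left_mono) auto
  also have "\<dots> = (\<eta> * (m/2))\<^sup>2" using mpos by (simp add: power2_eq_square field_simps)
  finally have wle: "(norm w)\<^sup>2 \<le> (\<eta> * (m/2))\<^sup>2" .
  hence wle': "norm w \<le> \<eta> * (m/2)" by (rule power2_le_imp_le) (use assms mpos in simp)
  define zp where "zp = y + m *\<^sub>R x"
  define zm where "zm = y - m *\<^sub>R x"
  have wp: "qv zp - m *\<^sub>R zp = w" unfolding zp_def w_def
    by (simp add: qv_add qv_scaleR y_def[symmetric] algebra_simps power2_eq_square)
  have wm: "qv zm - (- m) *\<^sub>R zm = w" unfolding zm_def w_def
    by (simp add: qv_diff qv_scaleR y_def[symmetric] algebra_simps power2_eq_square)
  have "norm y \<le> m * norm x" unfolding y_def by (rule qv_le_m)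
  moreover have e: "zp - zm = (2 * m) *\<^sub>R x" unfolding zp_def zm_def
    by simp (metis mult_2 scaleR_left_distrib)
  moreover have "norm ((2 * m) *\<^sub>R x) = 2 * (m * norm x)" using mpos by simp
  ultimately have "norm (zp - zm) = 2 * (m * norm x)" "norm y \<le> m * norm x" by simp_all
  hence "m \<le> norm (zp - zm)" using ny2 by linarith
  also have "\<dots> \<le> norm zp + norm zm" by (rule norm_triangle_ineq4)
  finally have "norm zp \<ge> m/2 \<or> norm zm \<ge> m/2" by linarith
  then obtain z a where za: "norm z \<ge> m/2" "\<bar>a\<bar> = m" "qv z - a *\<^sub>R z = w"
  proof
    assume "norm zp \<ge> m/2"
    moreover have "\<bar>m\<bar> = m" using mpos by simp
    ultimately show ?thesis using wp that by blast
  next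
    assume "norm zm \<ge> m/2"
    moreover have "\<bar>- m\<bar> = m" using mpos by simp
    ultimately show ?thesis using wm that by blast
  qed
  have zpos: "norm z > 0" using za(1) mpos by linarith
  let ?u = "(1 / norm z) *\<^sub>R z"
  have "qv ?u - a *\<^sub>R ?u = (1 / norm z) *\<^sub>R w"
    unfolding za(3)[symmetric] by (simp add: qv_scaleR algebra_simps)
  hence "norm (qv ?u - a *\<^sub>R ?u) = norm w / norm z" by simp
  also have "\<dots> \<le> (\<eta> * (m/2)) / (m/2)"
    using wle' za(1) zpos mpos assms by (intro frac_le) auto
  also have "\<dots> = \<eta>" using mpos by simp
  finally show ?thesis using zpos za(2) by (intro exI[of _ ?u] exI[of _ a]) simp
qed

end


lemma l2inner_delta: "l2inner (delta r) \<phi> = \<phi> r"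
proof -
  have "l2inner (delta r) \<phi> = infsum (\<lambda>n. \<phi> n) {r}"
    unfolding l2inner_def by (rule infsum_cong_neutral) (auto simp: delta_def)
  thus ?thesis by simp
qed

lemma vec_sum: "vec (sum f S) n = (\<Sum>l\<in>S. vec (f l) n)"
  by (induction S rule: infinite_finite_induct) auto

lemma card_window:
  fixes lo hi :: real
  shows "finite {r::int. lo < r \<and> r < hi}" "real (card {r::int. lo < r \<and> r < hi}) \<le> max 0 (hi - lo + 1)"
proof -
  have sub: "{r::int. lo < r \<and> r < hi} \<subseteq> {\<lceil>lo\<rceil>..\<lfloor>hi\<rfloor>}"
    by (auto simp: ceiling_le_iff le_floor_iff)
  thus "finite {r::int. lo < r \<and> r < hi}" by (rule finite_subset) simp
  hence "card {r::int. lo < r \<and> r < hi} \<le> card {\<lceil>lo\<rceil>..\<lfloor>hi\<rfloor>}" using sub by (intro card_mono) auto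
  also have "\<dots> = nat (\<lfloor>hi\<rfloor> - \<lceil>lo\<rceil> + 1)" by simp
  finally have "real (card {r::int. lo < r \<and> r < hi}) \<le> real (nat (\<lfloor>hi\<rfloor> - \<lceil>lo\<rceil> + 1))" by linarith
  also have "\<dots> \<le> max 0 (hi - lo + 1)"
  proof (cases "\<lfloor>hi\<rfloor> - \<lceil>lo\<rceil> + 1 \<ge> 0")
    case True
    hence "real (nat (\<lfloor>hi\<rfloor> - \<lceil>lo\<rceil> + 1)) = of_int (\<lfloor>hi\<rfloor> - \<lceil>lo\<rceil> + 1)" by simp
    also have "\<dots> \<le> hi - lo + 1" using le_of_int_ceiling[of lo] of_int_floor_le[of hi] by simp linarith
    finally show ?thesis by simp
  next
    case False thus ?thesis by simp
  qed
  finally show "real (card {r::int. lo < r \<and> r < hi}) \<le> max 0 (hi - lo + 1)" .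
qed

context schr begin

lemma bpow_mult: "bpow k (\<lambda>n. c * \<psi> n) = (\<lambda>n. c * bpow k \<psi> n)"
  unfolding bpow_def schrH_pow_mult by (simp add: fun_eq_iff mult.left_commute)

lemma U_cmul: "blin (U t) (cmul c x) = cmul c (blin (U t) x)"
proof (rule l2_eqI)
  fix n
  have s1: "(\<lambda>k. complex_of_real (t ^ k / fact k) * bpow k (vec (cmul c x)) n) sums vec (blin (U t) (cmul c x)) n"
    by (rule U_sums')
  have s2: "(\<lambda>k. c * (complex_of_real (t ^ k / fact k) * bpow k (vec x) n)) sums (c * vec (blin (U t) x) n)"
    by (rule sums_mult[OF U_sums'])
  have "(\<lambda>k. complex_of_real (t ^ k / fact k) * bpow k (vec (cmul c x)) n) = (\<lambda>k. c * (complex_of_real (t ^ k / fact k) * bpow k (vec x) n))"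
    by (simp add: bpow_mult mult_ac)
  thus "vec (blin (U t) (cmul c x)) n = vec (cmul c (blin (U t) x)) n"
    using s1 s2 sums_unique2 by simp
qed

end


context schrQ begin

lemma window:
  fixes N :: int and t \<epsilon> a :: real and v :: l2
  assumes t1: "t \<ge> 1" and eps: "\<epsilon> > 0"
    and supp: "\<And>n. \<bar>n\<bar> > N \<Longrightarrow> vec v n = 0" and N: "N \<ge> 0"
    and vn: "norm v \<ge> 1/2" "norm v \<le> 3/2"
    and Xe: "Xr (vec v) \<in> ell2"
    and Wn: "norm ((1/t) *\<^sub>R mk_l2 (Xr (vec v)) + Tav t v - a *\<^sub>R v) < \<epsilon>/4"
  shows "\<exists>l r::int. l \<in> {-N..N} \<and> \<bar>real_of_int r/t - a\<bar> < \<epsilon> \<and>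
     (cmod (evol \<nu> t (delta l) r))\<^sup>2 \<ge> (1 / (24 * (2 * real_of_int N + 1) * (2 * \<epsilon> + 1))) / t"
proof (rule ccontr)
  assume contra: "\<not> ?thesis"
  define C where "C = 1 / (24 * (2 * real_of_int N + 1) * (2 * \<epsilon> + 1))"
  define xx where "xx = mk_l2 (Xr (vec v))"
  define W where "W = (1/t) *\<^sub>R xx + Tav t v - a *\<^sub>R v"
  define \<phi> where "\<phi> = vec (blin (U t) v)"
  define e where "e l = mk_l2 (delta l)" for l
  define \<psi> where "\<psi> l = evol \<nu> t (delta l)" for l
  have tpos: "t > 0" using t1 by simp
  have XU: "(\<lambda>n. of_int n * \<phi> n) = vec (blin (U t) (xx + t *\<^sub>R Tav t v))"
    unfolding \<phi>_def xx_def by (rule X_U[OF Xe tpos])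
  have UW: "vec (blin (U t) W) n = complex_of_real (real_of_int n / t - a) * \<phi> n" for n
  proof -
    have "of_int n * \<phi> n = vec (blin (U t) xx) n + of_real t * vec (blin (U t) (Tav t v)) n"
      using fun_cong[OF XU, of n] by (simp add: blinfun.add_right blinfun.scaleR_right)
    moreover have "vec (blin (U t) W) n = of_real (1/t) * vec (blin (U t) xx) n + vec (blin (U t) (Tav t v)) n - of_real a * \<phi> n"
      unfolding W_def \<phi>_def by (simp add: blinfun.add_right blinfun.diff_right blinfun.scaleR_right)
    ultimately show ?thesis using tpos by (simp add: field_simps)
  qed
  let ?f = "\<lambda>r. (cmod (\<phi> r))\<^sup>2"
  let ?g = "\<lambda>r. (cmod (vec (blin (U t) W) r))\<^sup>2 / \<epsilon>\<^sup>2"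
  have sf: "?f summable_on UNIV" unfolding \<phi>_def by (rule vec_sq_summable)
  have sg: "?g summable_on UNIV" unfolding divide_inverse by (rule summable_on_cmult_left[OF vec_sq_summable])
  have g_eq: "?g r = ((real_of_int r / t - a) / \<epsilon>)\<^sup>2 * ?f r" for r
    unfolding UW norm_mult norm_of_real power_mult_distrib power2_abs by (simp add: power_divide)
  define Win where "Win = {r::int. (a - \<epsilon>) * t < real_of_int r \<and> real_of_int r < (a + \<epsilon>) * t}"
  have Win_iff: "r \<in> Win \<longleftrightarrow> \<bar>real_of_int r / t - a\<bar> < \<epsilon>" for r
    unfolding Win_def using tpos by (auto simp: abs_less_iff field_simps)
  have finW: "finite Win" unfolding Win_def by (rule card_window)
  have cardW: "real (card Win) \<le> 2 * \<epsilon> * t + 1"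
    using card_window(2)[of "(a - \<epsilon>) * t" "(a + \<epsilon>) * t"] eps tpos unfolding Win_def
    by (simp add: algebra_simps)
  have fg: "?f r \<le> ?g r" if "r \<notin> Win" for r
  proof -
    have "\<epsilon> \<le> \<bar>real_of_int r / t - a\<bar>" using that Win_iff by force
    hence "1 \<le> \<bar>(real_of_int r / t - a) / \<epsilon>\<bar>" using eps by simp
    hence "1 \<le> ((real_of_int r / t - a) / \<epsilon>)\<^sup>2" by (metis abs_ge_self one_le_power power2_abs order_trans)
    thus ?thesis unfolding g_eq by (simp add: mult_le_cancel_right1)
  qed
  have tot: "infsum ?f UNIV = (norm v)\<^sup>2" unfolding \<phi>_def norm_sq_l2[symmetric] by simp
  have totg: "infsum ?g UNIV = (norm W)\<^sup>2 / \<epsilon>\<^sup>2"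
  proof -
    have "infsum ?g UNIV = (norm (blin (U t) W))\<^sup>2 / \<epsilon>\<^sup>2"
      unfolding norm_sq_l2 by (simp add: infsum_cmult_left' divide_inverse)
    thus ?thesis by simp
  qed
  have "(norm W)\<^sup>2 \<le> (\<epsilon>/4)\<^sup>2" using Wn unfolding W_def xx_def by (intro power_mono) auto
  hence totg': "infsum ?g UNIV \<le> 1/16" unfolding totg using eps by (simp add: field_simps power2_eq_square)
  have "infsum ?f UNIV = infsum ?f (Win \<union> -Win)" by simp
  also have "\<dots> = infsum ?f Win + infsum ?f (-Win)"
    by (rule infsum_Un_disjoint) (auto intro: summable_on_subset_banach[OF sf])
  also have "infsum ?f Win = sum ?f Win" using finW by simp
  finally have split: "infsum ?f UNIV = sum ?f Win + infsum ?f (-Win)" .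
  have "infsum ?f (-Win) \<le> infsum ?g (-Win)"
    by (rule infsum_mono) (auto intro: summable_on_subset_banach[OF sf] summable_on_subset_banach[OF sg] fg)
  also have "\<dots> \<le> infsum ?g UNIV"
    by (rule infsum_mono_neutral) (auto intro: summable_on_subset_banach[OF sg])
  finally have "infsum ?f (-Win) \<le> 1/16" using totg' by simp
  moreover have "(norm v)\<^sup>2 \<ge> (1/2)\<^sup>2" using vn by (intro power_mono) auto
  ultimately have massW: "sum ?f Win \<ge> 3/16" using split tot by (simp add: power2_eq_square)
  have v_dec: "v = (\<Sum>l\<in>{-N..N}. cmul (vec v l) (e l))"
  proof (rule l2_eqI)
    fix n
    have "vec (\<Sum>l\<in>{-N..N}. cmul (vec v l) (e l)) n = (\<Sum>l\<in>{-N..N}. vec v l * (if n = l then 1 else 0))"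
      unfolding vec_sum e_def by (simp add: delta_ell2) (simp add: delta_def)
    also have "\<dots> = (\<Sum>l\<in>{-N..N}. if l = n then vec v n else 0)" by (rule sum.cong) auto
    also have "\<dots> = vec v n" using supp[of n] by (auto simp: sum.delta)
    finally show "vec v n = vec (\<Sum>l\<in>{-N..N}. cmul (vec v l) (e l)) n" by simp
  qed
  have phi_dec: "\<phi> r = (\<Sum>l\<in>{-N..N}. vec v l * \<psi> l r)" for r
  proof -
    have "blin (U t) v = (\<Sum>l\<in>{-N..N}. cmul (vec v l) (blin (U t) (e l)))"
      by (subst v_dec) (simp add: blinfun.sum_right U_cmul)
    hence "\<phi> r = (\<Sum>l\<in>{-N..N}. vec v l * vec (blin (U t) (e l)) r)" unfolding \<phi>_def by (simp add: vec_sum)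
    thus ?thesis unfolding \<psi>_def e_def by (simp add: evol_U delta_ell2)
  qed
  have sv: "(\<Sum>l\<in>{-N..N}. (cmod (vec v l))\<^sup>2) \<le> 9/4"
  proof -
    have "(\<Sum>l\<in>{-N..N}. (cmod (vec v l))\<^sup>2) \<le> (norm v)\<^sup>2" by (rule finite_sq_le) simp
    also have "\<dots> \<le> (3/2)\<^sup>2" using vn by (intro power_mono) auto
    finally show ?thesis by (simp add: power2_eq_square)
  qed
  have fbound: "?f r \<le> 9/4 * (\<Sum>l\<in>{-N..N}. (cmod (\<psi> l r))\<^sup>2)" for r
  proof -
    have "cmod (\<phi> r) \<le> (\<Sum>l\<in>{-N..N}. cmod (vec v l) * cmod (\<psi> l r))"
      unfolding phi_dec by (rule order_trans[OF norm_sum]) (simp add: norm_mult)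
    hence "?f r \<le> (\<Sum>l\<in>{-N..N}. cmod (vec v l) * cmod (\<psi> l r))\<^sup>2" by (intro power_mono) auto
    also have "\<dots> \<le> (\<Sum>l\<in>{-N..N}. (cmod (vec v l))\<^sup>2) * (\<Sum>l\<in>{-N..N}. (cmod (\<psi> l r))\<^sup>2)"
      by (rule Cauchy_Schwarz_ineq_sum)
    also have "\<dots> \<le> 9/4 * (\<Sum>l\<in>{-N..N}. (cmod (\<psi> l r))\<^sup>2)"
      using sv by (intro mult_right_mono sum_nonneg) auto
    finally show ?thesis .
  qed
  have small: "(cmod (\<psi> l r))\<^sup>2 \<le> C / t" if "l \<in> {-N..N}" "r \<in> Win" for l r
    using contra that Win_iff unfolding \<psi>_def C_def by force
  have "3/16 \<le> sum ?f Win" by (rule massW)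
  also have "\<dots> \<le> (\<Sum>r\<in>Win. 9/4 * (\<Sum>l\<in>{-N..N}. (cmod (\<psi> l r))\<^sup>2))" by (rule sum_mono) (rule fbound)
  also have "\<dots> \<le> (\<Sum>r\<in>Win. 9/4 * (real (card {-N..N}) * (C / t)))"
    by (intro sum_mono mult_left_mono sum_bounded_above small) auto
  also have "\<dots> = real (card Win) * (9/4 * (real (card {-N..N}) * (C / t)))" by simp
  also have "\<dots> \<le> (2 * \<epsilon> * t + 1) * (9/4 * (real (card {-N..N}) * (C / t)))"
    using cardW tpos eps unfolding C_def by (intro mult_right_mono) (auto simp: N)
  also have "real (card {-N..N}) = 2 * real_of_int N + 1" using N by simp
  also have "(2 * \<epsilon> * t + 1) * (9/4 * ((2 * real_of_int N + 1) * (C / t))) \<le> (2 * \<epsilon> + 1) * t * (9/4 * ((2 * real_of_int N + 1) * (C / t)))"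
    using t1 eps N unfolding C_def by (intro mult_right_mono) (auto simp: algebra_simps)
  also have "\<dots> = 9/4 * ((2 * \<epsilon> + 1) * (2 * real_of_int N + 1) * C)" using tpos by (simp add: field_simps)
  also have "(2 * \<epsilon> + 1) * (2 * real_of_int N + 1) * C = 1/24"
  proof -
    define D where "D = (2 * real_of_int N + 1) * (2 * \<epsilon> + 1)"
    have Dp: "D > 0" using eps N unfolding D_def by (intro mult_pos_pos) linarith+
    have C: "C = 1 / (24 * D)" unfolding C_def D_def by (simp add: mult.assoc)
    have "(2 * \<epsilon> + 1) * (2 * real_of_int N + 1) = D" unfolding D_def by (simp add: mult.commute)
    thus ?thesis unfolding C using Dp by simp
  qed
  finally show False by simp
qed

end


context schrQ begin

lemma main:
  assumes eps: "\<epsilon> > 0"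
  shows "\<exists>K::nat. \<exists>L::real. \<exists>C::real. L \<ge> 0 \<and> C > 0 \<and>
           (\<forall>k\<ge>K. \<exists>l r :: int. \<bar>real_of_int l\<bar> \<le> L \<and>
              (opnorm Q - \<epsilon>) * T k \<le> \<bar>real_of_int r\<bar> \<and> \<bar>real_of_int r\<bar> \<le> (opnorm Q + \<epsilon>) * T k \<and>
              (cmod (l2inner (delta r) (evol \<nu> (T k) (delta l))))\<^sup>2 \<ge> C / T k)"
proof -
  have e16: "\<epsilon>/16 > 0" using eps by simp
  obtain u a where u: "norm u = 1" "\<bar>a\<bar> = m" "norm (qv u - a *\<^sub>R u) \<le> \<epsilon>/16"
    using approx_eig[OF e16] by blast
  define \<eta> where "\<eta> = min (1/2) (\<epsilon> / (16 * (m + 1)))"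
  have m0: "m \<ge> 0" by (rule m_nonneg)
  have \<eta>1: "\<eta> > 0" using eps m0 unfolding \<eta>_def by simp
  have \<eta>2: "\<eta> \<le> 1/2" unfolding \<eta>_def by (rule min.cobounded1)
  have \<eta>3: "\<eta> \<le> \<epsilon> / (16 * (m + 1))" unfolding \<eta>_def by (rule min.cobounded2)
  note \<eta> = \<eta>1 \<eta>2 \<eta>3
  obtain N0 where N0: "norm (u - trunc N0 u) \<le> \<eta>" using trunc_approx[OF \<eta>(1)] by blast
  define N where "N = max N0 0"
  define v where "v = trunc N0 u"
  have N: "N \<ge> 0" unfolding N_def by simp
  have supp: "vec v n = 0" if "\<bar>n\<bar> > N" for n
    using that unfolding v_def N_def vec_trunc by auto
  have "norm u \<le> norm v + norm (u - v)" by (rule norm_triangle_sub)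
  hence vn1: "norm v \<ge> 1/2" using N0 \<eta> u unfolding v_def by linarith
  have "norm v \<le> norm u + norm (u - v)" by (metis norm_minus_commute norm_triangle_sub)
  hence vn2: "norm v \<le> 3/2" using N0 \<eta> u unfolding v_def by linarith
  have muv: "m * norm (u - v) \<le> \<epsilon>/16"
  proof -
    have "m * norm (u - v) \<le> m * (\<epsilon> / (16 * (m + 1)))"
      using N0 \<eta> m0 unfolding v_def by (intro mult_left_mono) auto
    also have "\<dots> = (\<epsilon>/16) * (m / (m + 1))" using m0 by (simp add: field_simps)
    also have "\<dots> \<le> (\<epsilon>/16) * 1" using m0 eps by (intro mult_left_mono) auto
    finally show ?thesis by simp
  qed
  have qerr: "norm (qv v - a *\<^sub>R v) \<le> 3 * \<epsilon> / 16"
  proof -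
    have eq: "qv v - a *\<^sub>R v = (qv u - a *\<^sub>R u) - (qv (u - v) - a *\<^sub>R (u - v))"
      by (simp add: qv_diff algebra_simps)
    have "norm (qv v - a *\<^sub>R v) \<le> norm (qv u - a *\<^sub>R u) + norm (qv (u - v) - a *\<^sub>R (u - v))"
      unfolding eq by (rule norm_triangle_ineq4)
    also have "norm (qv (u - v) - a *\<^sub>R (u - v)) \<le> norm (qv (u - v)) + norm (a *\<^sub>R (u - v))"
      by (rule norm_triangle_ineq4)
    also have "norm (a *\<^sub>R (u - v)) = m * norm (u - v)" using u(2) by simp
    also have "norm (qv (u - v)) \<le> m * norm (u - v)" by (rule qv_le_m)
    finally show ?thesis using u(3) muv by linarith
  qed
  define xx where "xx = mk_l2 (Xr (vec v))"
  have Xe: "Xr (vec v) \<in> ell2"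
  proof (rule fin_ell2, rule finite_subset[of _ "{-N..N}"])
    have supp': "\<bar>n\<bar> \<le> N" if "vec v n \<noteq> 0" for n using supp that by force
    show "{n. Xr (vec v) n \<noteq> 0} \<subseteq> {-N..N}"
      by (auto simp: Xr_def abs_le_iff dest!: supp')
  qed simp
  define W where "W k = (1 / T k) *\<^sub>R xx + Tav (T k) v - a *\<^sub>R v" for k
  have inv0: "(\<lambda>k. 1 / T k) \<longlonglongrightarrow> 0"
    by (rule tendsto_divide_0[OF tendsto_const filterlim_at_top_imp_at_infinity[OF Tlim]])
  have "W \<longlonglongrightarrow> 0 *\<^sub>R xx + qv v - a *\<^sub>R v"
    unfolding W_def by (intro tendsto_intros inv0 Tav_lim)
  hence Wlim: "W \<longlonglongrightarrow> qv v - a *\<^sub>R v" by simp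
  have "norm (qv v - a *\<^sub>R v) < \<epsilon>/4" using qerr eps by linarith
  hence ev1: "\<forall>\<^sub>F k in sequentially. norm (W k) < \<epsilon>/4"
    using order_tendstoD(2)[OF tendsto_norm[OF Wlim]] by blast
  have "\<forall>\<^sub>F k in sequentially. norm (W k) < \<epsilon>/4 \<and> T k \<ge> 1"
    using ev1 T_ev[of 1] by (rule eventually_conj)
  then obtain K where K: "\<And>k. k \<ge> K \<Longrightarrow> norm (W k) < \<epsilon>/4 \<and> T k \<ge> 1"
    unfolding eventually_sequentially by blast
  define L where "L = real_of_int N"
  define C where "C = 1 / (24 * (2 * real_of_int N + 1) * (2 * \<epsilon> + 1))"
  have Lpos: "L \<ge> 0" unfolding L_def using N by simp
  have Cpos: "C > 0" unfolding C_def using N eps by simp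
  show ?thesis
    apply (rule exI[of _ K], rule exI[of _ L], rule exI[of _ C])
  proof (intro conjI Lpos Cpos allI impI)
    fix k assume "K \<le> k"
    hence Kk: "norm (W k) < \<epsilon>/4" "T k \<ge> 1" using K by auto
    obtain l r :: int where lr: "l \<in> {-N..N}" "\<bar>real_of_int r / T k - a\<bar> < \<epsilon>"
      "(cmod (evol \<nu> (T k) (delta l) r))\<^sup>2 \<ge> C / T k"
      using window[OF Kk(2) eps supp N vn1 vn2 Xe] Kk(1) unfolding W_def xx_def C_def by blast
    have tpos: "T k > 0" using Kk by simp
    have r1: "\<bar>\<bar>real_of_int r\<bar> / T k - m\<bar> < \<epsilon>"
    proof -
      have "\<bar>\<bar>real_of_int r / T k\<bar> - \<bar>a\<bar>\<bar> \<le> \<bar>real_of_int r / T k - a\<bar>" by (rule abs_triangle_ineq3)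
      thus ?thesis using lr(2) u(2) tpos by simp
    qed
    hence r2: "(m - \<epsilon>) * T k \<le> \<bar>real_of_int r\<bar> \<and> \<bar>real_of_int r\<bar> \<le> (m + \<epsilon>) * T k"
      using tpos by (auto simp: abs_less_iff field_simps)
    show "\<exists>l r :: int. \<bar>real_of_int l\<bar> \<le> L \<and>
              (opnorm Q - \<epsilon>) * T k \<le> \<bar>real_of_int r\<bar> \<and> \<bar>real_of_int r\<bar> \<le> (opnorm Q + \<epsilon>) * T k \<and>
              (cmod (l2inner (delta r) (evol \<nu> (T k) (delta l))))\<^sup>2 \<ge> C / T k"
      using lr r2 unfolding L_def m_def[symmetric] l2inner_delta by (intro exI[of _ l] exI[of _ r]) auto
  qed
qed

end



theorem proposition6p2:
  fixes \<nu> :: "int \<Rightarrow> real" and T :: "nat \<Rightarrow> real"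
    and Q :: "(int \<Rightarrow> complex) \<Rightarrow> (int \<Rightarrow> complex)"
  assumes "bounded (range \<nu>)"
    and "filterlim T at_top sequentially"
    and "\<forall>\<psi>\<in>ell2. Q \<psi> \<in> ell2 \<and> (\<lambda>k. l2norm (\<lambda>n. tavg \<nu> (T k) \<psi> n - Q \<psi> n)) \<longlonglongrightarrow> 0"
  shows "\<forall>\<epsilon>>0. \<exists>K::nat. \<exists>L::real. \<exists>C::real. L \<ge> 0 \<and> C > 0 \<and>
           (\<forall>k\<ge>K. \<exists>l r :: int. \<bar>real_of_int l\<bar> \<le> L \<and>
              (opnorm Q - \<epsilon>) * T k \<le> \<bar>real_of_int r\<bar> \<and> \<bar>real_of_int r\<bar> \<le> (opnorm Q + \<epsilon>) * T k \<and>
              (cmod (l2inner (delta r) (evol \<nu> (T k) (delta l))))\<^sup>2 \<ge> C / T k)"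
proof -
  interpret schrQ \<nu> T Q
    by unfold_locales (use assms in auto)
  show ?thesis by (intro allI impI main)
qed

end
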